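(* Let $r,t$ be integers with $2\le r\le t\le 2r$, let $\alpha=2^r-1$, $\beta=2^{t-1}-2^{r-1}$, and let $\mathcal{C}\subseteq\mathbb{Z}_2^\alpha\times\mathbb{Z}_4^\beta$ be a $\mathbb{Z}_2\mathbb{Z}_4$-additive 1-perfect code. Then (i) $\mathcal{C}$ has type $(\alpha,\beta;\gamma,\delta;\kappa)$ with $\gamma=2^r-1-2r+t$, $\delta=2^{t-1}-2^{r-1}+r-t$ and $\kappa=\gamma$; (ii) the dual code $\mathcal{C}^\perp$ has type $(\alpha,\beta;\bar\gamma,\bar\delta;\bar\kappa)$ with $\bar\gamma=2r-t$, $\bar\delta=t-r$ and $\bar\kappa=\bar\gamma$.
   Context: A $\mathbb{Z}_2\mathbb{Z}_4$-additive code is an additive subgroup $\mathcal{C}$ of $\mathbb{Z}_2^\alpha\times\mathbb{Z}_4^\beta$; vectors are $\mathbf{u}=(u\mid u')$ with $u\in\mathbb{Z}_2^\alpha$, $u'\in\mathbb{Z}_4^\beta$; $X$ denotes the first $\alpha$ coordinates and $S_X$ the set of projections of a set $S$ of vectors onto $X$. The Gray map $\phi:\mathbb{Z}_4\to\mathbb{Z}_2^2$ is $0\mapsto(0,0),1\mapsto(0,1),2\mapsto(1,1),3\mapsto(1,0)$, and $\Phi(u\mid u')=(u\mid\phi(u'_1),\dots,\phi(u'_\beta))$. A binary code $C\subseteq\mathbb{Z}_2^n$ is 1-perfect if the Hamming balls of radius 1 around its codewords partition $\mathbb{Z}_2^n$; a $\mathbb{Z}_2\mathbb{Z}_4$-additive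 code is 1-perfect if its Gray image is. If $\mathcal{C}\cong\mathbb{Z}_2^\gamma\times\mathbb{Z}_4^\delta$ as a group, $\mathcal{C}_b$ is the subgroup of codewords of order at most 2, and $\kappa=\dim (\mathcal{C}_b)_X$, then $\mathcal{C}$ has type $(\alpha,\beta;\gamma,\delta;\kappa)$. The dual is $\mathcal{C}^\perp=\{\mathbf{v}:\mathbf{u}\cdot\mathbf{v}=0\ \forall\mathbf{u}\in\mathcal{C}\}$ with $\mathbf{u}\cdot\mathbf{v}=2\sum_{i=1}^\alpha u_iv_i+\sum_{j=1}^\beta u'_jv'_j\in\mathbb{Z}_4$ (binary entries read as $0,1\in\mathbb{Z}_4$). *)

theory Defs
  imports Main
begin

text \<open>A vector of Z2^a x Z4^b is a pair (u, u') of functions nat => int, where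
  u i in {0,1} for i < a and u i = 0 otherwise, and u' j in {0,1,2,3} for j < b
  and u' j = 0 otherwise.\<close>

type_synonym z2z4vec = "(nat \<Rightarrow> int) \<times> (nat \<Rightarrow> int)"

definition V :: "nat \<Rightarrow> nat \<Rightarrow> z2z4vec set" where
  "V a b = {(u, u'). (\<forall>i. if i < a then u i \<in> {0,1} else u i = 0) \<and>
                     (\<forall>j. if j < b then u' j \<in> {0,1,2,3} else u' j = 0)}"

definition vadd :: "z2z4vec \<Rightarrow> z2z4vec \<Rightarrow> z2z4vec" where
  "vadd x y = ((\<lambda>i. (fst x i + fst y i) mod 2), (\<lambda>j. (snd x j + snd y j) mod 4))"

definition vzero :: z2z4vec where
  "vzero = ((\<lambda>i. 0), (\<lambda>j. 0))"

text \<open>Additive subgroup of Z2^a x Z4^b (finite, so closure under addition suffices).\<close>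
definition additive_code :: "nat \<Rightarrow> nat \<Rightarrow> z2z4vec set \<Rightarrow> bool" where
  "additive_code a b C \<longleftrightarrow> C \<subseteq> V a b \<and> vzero \<in> C \<and> (\<forall>x\<in>C. \<forall>y\<in>C. vadd x y \<in> C)"

definition iso_Z2Z4 :: "z2z4vec set \<Rightarrow> nat \<Rightarrow> nat \<Rightarrow> bool" where
  "iso_Z2Z4 C g d \<longleftrightarrow> (\<exists>f. bij_betw f C (V g d) \<and>
       (\<forall>x\<in>C. \<forall>y\<in>C. f (vadd x y) = vadd (f x) (f y)))"

definition order2_part :: "z2z4vec set \<Rightarrow> z2z4vec set" where
  "order2_part C = {x \<in> C. vadd x x = vzero}"

definition bsum :: "(nat \<Rightarrow> int) set \<Rightarrow> (nat \<Rightarrow> int)" where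
  "bsum S = (\<lambda>i. (\<Sum>v\<in>S. v i) mod 2)"

definition bin_dim :: "(nat \<Rightarrow> int) set \<Rightarrow> nat \<Rightarrow> bool" where
  "bin_dim W k \<longleftrightarrow> (\<exists>B. finite B \<and> B \<subseteq> W \<and> card B = k \<and>
       inj_on bsum (Pow B) \<and> bsum ` Pow B = W)"

definition has_type :: "nat \<Rightarrow> nat \<Rightarrow> z2z4vec set \<Rightarrow> nat \<Rightarrow> nat \<Rightarrow> nat \<Rightarrow> bool" where
  "has_type a b C g d k \<longleftrightarrow> additive_code a b C \<and> iso_Z2Z4 C g d \<and>
       bin_dim (fst ` order2_part C) k"

definition inner24 :: "nat \<Rightarrow> nat \<Rightarrow> z2z4vec \<Rightarrow> z2z4vec \<Rightarrow> int" where
  "inner24 a b x y = (2 * (\<Sum>i<a. fst x i * fst y i) + (\<Sum>j<b. snd x j * snd y j)) mod 4"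

definition dual :: "nat \<Rightarrow> nat \<Rightarrow> z2z4vec set \<Rightarrow> z2z4vec set" where
  "dual a b C = {y \<in> V a b. \<forall>x\<in>C. inner24 a b x y = 0}"

text \<open>Gray map: 0 -> (0,0), 1 -> (0,1), 2 -> (1,1), 3 -> (1,0).\<close>
definition gray1 :: "int \<Rightarrow> int" where
  "gray1 z = (if z = 2 \<or> z = 3 then 1 else 0)"
definition gray2 :: "int \<Rightarrow> int" where
  "gray2 z = (if z = 1 \<or> z = 2 then 1 else 0)"

definition Phi :: "nat \<Rightarrow> z2z4vec \<Rightarrow> (nat \<Rightarrow> int)" where
  "Phi a x = (\<lambda>i. if i < a then fst x i
                 else if even (i - a) then gray1 (snd x ((i - a) div 2))
                 else gray2 (snd x ((i - a) div 2)))"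

definition BV :: "nat \<Rightarrow> (nat \<Rightarrow> int) set" where
  "BV n = {x. \<forall>i. if i < n then x i \<in> {0,1} else x i = 0}"

definition hdist :: "nat \<Rightarrow> (nat \<Rightarrow> int) \<Rightarrow> (nat \<Rightarrow> int) \<Rightarrow> nat" where
  "hdist n x y = card {i. i < n \<and> x i \<noteq> y i}"

definition perfect1 :: "nat \<Rightarrow> (nat \<Rightarrow> int) set \<Rightarrow> bool" where
  "perfect1 n D \<longleftrightarrow> D \<subseteq> BV n \<and> (\<forall>x\<in>BV n. \<exists>!c. c \<in> D \<and> hdist n x c \<le> 1)"

end

theory Submission
  imports Defs "HOL-Library.FuncSet" Complex_Main
begin

definition vneg :: "z2z4vec \<Rightarrow> z2z4vec" where
  "vneg x = ((\<lambda>i. (- fst x i) mod 2), (\<lambda>j. (- snd x j) mod 4))"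
definition vsub :: "z2z4vec \<Rightarrow> z2z4vec \<Rightarrow> z2z4vec" where
  "vsub x y = vadd x (vneg y)"

lemma vadd_fst[simp]: "fst (vadd x y) i = (fst x i + fst y i) mod 2" by (simp add: vadd_def)
lemma vadd_snd[simp]: "snd (vadd x y) j = (snd x j + snd y j) mod 4" by (simp add: vadd_def)
lemma vsub_fst[simp]: "fst (vsub x y) i = (fst x i - fst y i) mod 2"
  by (simp add: vsub_def vneg_def mod_add_right_eq)
lemma vsub_snd[simp]: "snd (vsub x y) j = (snd x j - snd y j) mod 4"
  by (simp add: vsub_def vneg_def mod_add_right_eq)
lemma vzero_fst[simp]: "fst vzero i = 0" and vzero_snd[simp]: "snd vzero j = 0"
  by (auto simp: vzero_def)

lemma vec_eqI: "(\<And>i. fst x i = fst y i) \<Longrightarrow> (\<And>j. snd x j = snd y j) \<Longrightarrow> x = y"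
  by (cases x, cases y) auto

lemma V_iff: "x \<in> V a b \<longleftrightarrow> (\<forall>i. if i < a then fst x i \<in> {0,1} else fst x i = 0) \<and>
    (\<forall>j. if j < b then snd x j \<in> {0,1,2,3} else snd x j = 0)"
  by (cases x) (simp add: V_def)

lemma V_fst: "x \<in> V a b \<Longrightarrow> fst x i mod 2 = fst x i"
  by (auto simp: V_iff split: if_splits dest!: spec[of _ i])
lemma V_snd: "x \<in> V a b \<Longrightarrow> snd x j mod 4 = snd x j"
  by (auto simp: V_iff split: if_splits dest!: spec[of _ j])
lemma V_fst_out: "x \<in> V a b \<Longrightarrow> \<not> i < a \<Longrightarrow> fst x i = 0"
  by (auto simp: V_iff dest!: spec[of _ i])
lemma V_snd_out: "x \<in> V a b \<Longrightarrow> \<not> j < b \<Longrightarrow> snd x j = 0"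
  by (auto simp: V_iff dest!: spec[of _ j])
lemma V_fst01: "x \<in> V a b \<Longrightarrow> fst x i = 0 \<or> fst x i = 1"
  by (auto simp: V_iff split: if_splits dest!: spec[of _ i])
lemma V_snd03: "x \<in> V a b \<Longrightarrow> snd x j = 0 \<or> snd x j = 1 \<or> snd x j = 2 \<or> snd x j = 3"
  by (auto simp: V_iff split: if_splits dest!: spec[of _ j])

lemma V_closed: assumes x: "x \<in> V a b" and y: "y \<in> V a b" shows "vadd x y \<in> V a b"
  unfolding V_iff
proof (intro conjI allI)
  fix i j
  show "if i < a then fst (vadd x y) i \<in> {0, 1} else fst (vadd x y) i = 0"
    using V_fst01[OF x, of i] V_fst01[OF y, of i] V_fst_out[OF x, of i] V_fst_out[OF y, of i] by auto
  show "if j < b then snd (vadd x y) j \<in> {0, 1, 2, 3} else snd (vadd x y) j = 0"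
    using V_snd03[OF x, of j] V_snd03[OF y, of j] V_snd_out[OF x, of j] V_snd_out[OF y, of j] by auto
qed

lemma V_vsub: assumes x: "x \<in> V a b" and y: "y \<in> V a b" shows "vsub x y \<in> V a b"
  unfolding V_iff
proof (intro conjI allI)
  fix i j
  show "if i < a then fst (vsub x y) i \<in> {0, 1} else fst (vsub x y) i = 0"
    using V_fst01[OF x, of i] V_fst01[OF y, of i] V_fst_out[OF x, of i] V_fst_out[OF y, of i] by auto
  show "if j < b then snd (vsub x y) j \<in> {0, 1, 2, 3} else snd (vsub x y) j = 0"
    using V_snd03[OF x, of j] V_snd03[OF y, of j] V_snd_out[OF x, of j] V_snd_out[OF y, of j] by auto
qed

lemma vzero_V[simp]: "vzero \<in> V a b" by (simp add: V_iff)

lemma vadd_comm: "vadd x y = vadd y x" by (simp add: vadd_def add.commute)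
lemma vadd_assoc: "vadd (vadd x y) z = vadd x (vadd y z)"
  by (rule vec_eqI) (simp_all add: mod_add_left_eq mod_add_right_eq add.assoc)
lemma vadd_zero[simp]: "x \<in> V a b \<Longrightarrow> vadd vzero x = x" "x \<in> V a b \<Longrightarrow> vadd x vzero = x"
  by (auto intro!: vec_eqI simp: V_fst V_snd)
lemma vadd_vsub_cancel: "y \<in> V a b \<Longrightarrow> vadd (vsub y x) x = y"
  by (rule vec_eqI) (simp_all add: mod_add_left_eq V_fst V_snd)
lemma vsub_vadd_cancel: "y \<in> V a b \<Longrightarrow> vsub (vadd y x) x = y"
  by (rule vec_eqI) (simp_all add: mod_diff_left_eq V_fst V_snd)
lemma vsub_self[simp]: "vsub x x = vzero"
  by (rule vec_eqI) simp_all
lemma vsub_eq0: "x \<in> V a b \<Longrightarrow> y \<in> V a b \<Longrightarrow> vsub x y = vzero \<longleftrightarrow> x = y"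
  by (metis vadd_vsub_cancel vadd_zero(1) vsub_self)
lemma vadd_cancel: "x \<in> V a b \<Longrightarrow> y \<in> V a b \<Longrightarrow> vadd x z = vadd y z \<longleftrightarrow> x = y"
  by (metis vsub_vadd_cancel)
lemma vadd_cancel2: "x \<in> V a b \<Longrightarrow> y \<in> V a b \<Longrightarrow> vadd z x = vadd z y \<longleftrightarrow> x = y"
  by (metis vsub_vadd_cancel vadd_comm)

definition W :: "nat \<Rightarrow> nat \<Rightarrow> z2z4vec set" where
  "W a b = {x \<in> V a b. vadd x x = vzero}"
definition W0 :: "nat \<Rightarrow> nat \<Rightarrow> z2z4vec set" where
  "W0 a b = {x \<in> V a b. fst x = (\<lambda>_. 0) \<and> vadd x x = vzero}"

definition FS :: "nat \<Rightarrow> int set \<Rightarrow> (nat \<Rightarrow> int) set" where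
  "FS a S = {u. \<forall>i. if i < a then u i \<in> S else u i = 0}"

lemma FS_bij: "bij_betw (\<lambda>u. restrict u {..<a}) (FS a S) (PiE {..<a} (\<lambda>_. S))"
  proof (rule bij_betwI[where g = "\<lambda>f i. if i < a then f i else 0"])
    show "(\<lambda>u. restrict u {..<a}) \<in> FS a S \<rightarrow> PiE {..<a} (\<lambda>_. S)"
      by (auto simp: FS_def dest!: spec)
    show "(\<lambda>f i. if i < a then f i else 0) \<in> PiE {..<a} (\<lambda>_. S) \<rightarrow> FS a S"
      by (auto simp: FS_def PiE_def Pi_def)
    show "(\<lambda>i. if i < a then restrict x {..<a} i else 0) = x" if "x \<in> FS a S" for x
      using that by (auto simp: FS_def fun_eq_iff dest!: spec)
    show "restrict (\<lambda>i. if i < a then y i else 0) {..<a} = y" if "y \<in> PiE {..<a} (\<lambda>_. S)" for y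
      using that by (auto simp: PiE_def fun_eq_iff extensional_def)
  qed

lemma card_FS: assumes "finite S" shows "card (FS a S) = card S ^ a"
proof -
  have "card (FS a S) = card (PiE {..<a} (\<lambda>_. S))" by (rule bij_betw_same_card[OF FS_bij])
  also have "\<dots> = card S ^ a" by (simp add: card_PiE)
  finally show ?thesis .
qed

lemma FS_finite: assumes "finite S" shows "finite (FS a S)"
  using bij_betw_finite[OF FS_bij] assms by (simp add: finite_PiE)

lemma V_eq: "V a b = FS a {0,1} \<times> FS b {0,1,2,3}"
  by (auto simp: V_def FS_def)

lemma W_iff: "x \<in> W a b \<longleftrightarrow> x \<in> V a b \<and> (\<forall>j. even (snd x j))"
proof -
  have "vadd x x = vzero \<longleftrightarrow> (\<forall>j. even (snd x j))" if "x \<in> V a b"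
  proof -
    have "vadd x x = vzero \<longleftrightarrow> (\<forall>j. (snd x j + snd x j) mod 4 = 0)"
      by (auto simp: vzero_def vadd_def fun_eq_iff prod_eq_iff)
    also have "\<dots> \<longleftrightarrow> (\<forall>j. even (snd x j))"
    proof -
      have "((snd x j + snd x j) mod 4 = 0) = even (snd x j)" for j
        using V_snd03[OF that, of j] by auto
      then show ?thesis by simp
    qed
    finally show ?thesis .
  qed
  then show ?thesis by (auto simp: W_def)
qed

lemma finite_V[simp]: "finite (V a b)"
  by (simp add: V_eq FS_finite)

lemma card_V: "card (V a b) = 2^(a + 2*b)"
proof -
  have "card (V a b) = 2^a * 4^b" by (simp add: V_eq card_cartesian_product card_FS eval_nat_numeral)
  also have "\<dots> = 2^(a+2*b)" by (simp add: power_add power_mult)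
  finally show ?thesis .
qed

lemma W_eq: "W a b = FS a {0,1} \<times> FS b {0,2}"
proof (rule set_eqI)
  fix x :: z2z4vec
  obtain u u' where x: "x = (u,u')" by (cases x)
  have "x \<in> W a b \<longleftrightarrow> u \<in> FS a {0,1} \<and> (\<forall>j. if j < b then u' j \<in> {0,1,2,3} else u' j = 0) \<and> (\<forall>j. even (u' j))"
    by (simp add: W_iff V_def FS_def x)
  also have "\<dots> \<longleftrightarrow> u \<in> FS a {0,1} \<and> u' \<in> FS b {0,2}"
  proof -
    have "((if j < b then u' j \<in> {0,1,2,3} else u' j = 0) \<and> even (u' j)) \<longleftrightarrow>
          (if j < b then u' j \<in> {0,2} else u' j = 0)" for j
      by auto
    then show ?thesis unfolding FS_def by (simp add: all_conj_distrib[symmetric])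
  qed
  finally show "x \<in> W a b \<longleftrightarrow> x \<in> FS a {0,1} \<times> FS b {0,2}" by (simp add: x)
qed

lemma W0_eq: "W0 a b = {(\<lambda>_. 0)} \<times> FS b {0,2}"
proof (rule set_eqI)
  fix x :: z2z4vec
  have "x \<in> W0 a b \<longleftrightarrow> x \<in> W a b \<and> fst x = (\<lambda>_. 0)" by (auto simp: W0_def W_def)
  also have "\<dots> \<longleftrightarrow> x \<in> {(\<lambda>_. 0)} \<times> FS b {0,2}" by (cases x) (auto simp: W_eq FS_def)
  finally show "x \<in> W0 a b \<longleftrightarrow> x \<in> {(\<lambda>_. 0)} \<times> FS b {0,2}" .
qed

lemma card_W: "card (W a b) = 2^(a + b)"
  by (simp add: W_eq card_cartesian_product card_FS power_add eval_nat_numeral)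
lemma card_W0: "card (W0 a b) = 2^b"
  by (simp add: W0_eq card_cartesian_product card_FS eval_nat_numeral)
lemma W_sub: "W a b \<subseteq> V a b" and W0_sub: "W0 a b \<subseteq> W a b"
  by (auto simp: W_def W0_def)

lemma vneg_eq: assumes "y \<in> V a b" shows "vneg y = vadd y (vadd y y)"
proof (rule vec_eqI)
  fix i show "fst (vneg y) i = fst (vadd y (vadd y y)) i"
    using V_fst01[OF assms, of i] by (auto simp: vneg_def)
next
  fix j show "snd (vneg y) j = snd (vadd y (vadd y y)) j"
    using V_snd03[OF assms, of j] by (auto simp: vneg_def)
qed

lemma ac_sub: "additive_code a b H \<Longrightarrow> H \<subseteq> V a b"
  by (simp add: additive_code_def)
lemma ac_zero: "additive_code a b H \<Longrightarrow> vzero \<in> H"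
  by (simp add: additive_code_def)
lemma ac_add: "additive_code a b H \<Longrightarrow> x \<in> H \<Longrightarrow> y \<in> H \<Longrightarrow> vadd x y \<in> H"
  by (simp add: additive_code_def)
lemma ac_sub2: assumes "additive_code a b H" "x \<in> H" "y \<in> H" shows "vsub x y \<in> H"
proof -
  have "y \<in> V a b" using assms ac_sub by blast
  then have "vsub x y = vadd x (vadd y (vadd y y))" by (simp add: vsub_def vneg_eq)
  moreover have "vadd y y \<in> H" using ac_add[OF assms(1) assms(3) assms(3)] .
  then have "vadd y (vadd y y) \<in> H" using ac_add[OF assms(1) assms(3)] by blast
  then have "vadd x (vadd y (vadd y y)) \<in> H" using ac_add[OF assms(1) assms(2)] by blast
  ultimately show ?thesis by simp
qed
lemma ac_finite: "additive_code a b H \<Longrightarrow> finite H"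
  using finite_subset[OF ac_sub finite_V] by blast

lemma fiber_count:
  assumes UV: "U \<subseteq> V a b" and KV: "K \<subseteq> V a b" and fin: "finite U"
    and tr: "\<And>x k. x \<in> U \<Longrightarrow> k \<in> K \<Longrightarrow> vadd k x \<in> U"
    and fe: "\<And>x y. x \<in> U \<Longrightarrow> y \<in> U \<Longrightarrow> f x = f y \<longleftrightarrow> vsub x y \<in> K"
  shows "card U = card (f ` U) * card K"
proof -
  have fib: "{y\<in>U. f y = f x} = (\<lambda>k. vadd k x) ` K" if x: "x \<in> U" for x
  proof
    show "{y \<in> U. f y = f x} \<subseteq> (\<lambda>k. vadd k x) ` K"
    proof
      fix y assume "y \<in> {y \<in> U. f y = f x}"
      then have y: "y \<in> U" "f y = f x" by auto
      then have "vsub y x \<in> K" using fe x by blast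
      moreover have "y = vadd (vsub y x) x" using vadd_vsub_cancel[of y a b x] y UV by auto
      ultimately show "y \<in> (\<lambda>k. vadd k x) ` K" by blast
    qed
    show "(\<lambda>k. vadd k x) ` K \<subseteq> {y \<in> U. f y = f x}"
    proof
      fix y assume "y \<in> (\<lambda>k. vadd k x) ` K"
      then obtain k where k: "k \<in> K" "y = vadd k x" by auto
      have "y \<in> U" using tr x k by auto
      moreover have "vsub y x = k" using k vsub_vadd_cancel[of k a b x] KV by auto
      ultimately show "y \<in> {y \<in> U. f y = f x}" using fe[of y x] x k by auto
    qed
  qed
  have cfib: "card {y\<in>U. f y = z} = card K" if z: "z \<in> f ` U" for z
  proof -
    obtain x where x: "x \<in> U" "z = f x" using z by auto
    have "inj_on (\<lambda>k. vadd k x) K"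
      by (rule inj_onI) (use KV vadd_cancel in blast)
    then show ?thesis using fib[OF x(1)] x(2) by (simp add: card_image)
  qed
  have "U = (\<Union>z\<in>f ` U. {y\<in>U. f y = z})" by auto
  then have "card U = card (\<Union>z\<in>f ` U. {y\<in>U. f y = z})" by simp
  also have "\<dots> = (\<Sum>z\<in>f ` U. card {y\<in>U. f y = z})"
    by (rule card_UN_disjoint) (use fin in auto)
  also have "\<dots> = (\<Sum>z\<in>f ` U. card K)" using cfib by simp
  finally show ?thesis by simp
qed

lemma pow2_eq: fixes x :: nat assumes "2^N = 2^M * x" "x \<noteq> 0"
  shows "M \<le> N \<and> x = 2^(N - M)"
proof -
  have "(2::nat)^M \<le> 2^N" using assms by (metis le_add1 mult_le_mono2 mult_1_right Suc_leI neq0_conv One_nat_def)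
  then have MN: "M \<le> N" by simp
  then have "(2::nat)^N = 2^M * 2^(N-M)" by (simp add: power_add[symmetric])
  then show ?thesis using assms MN by simp
qed

definition ebin :: "nat \<Rightarrow> z2z4vec" where
  "ebin i = ((\<lambda>l. if l = i then 1 else 0), (\<lambda>_. 0))"
definition equa :: "nat \<Rightarrow> int \<Rightarrow> z2z4vec" where
  "equa j k = ((\<lambda>_. 0), (\<lambda>l. if l = j then k else 0))"
definition isE :: "nat \<Rightarrow> nat \<Rightarrow> z2z4vec \<Rightarrow> bool" where
  "isE a b d \<longleftrightarrow> d = vzero \<or> (\<exists>i<a. d = ebin i) \<or> (\<exists>j<b. \<exists>k\<in>{1,3}. d = equa j k)"

lemma ebin_fst[simp]: "fst (ebin i) l = (if l = i then 1 else 0)" and ebin_snd[simp]: "snd (ebin i) l = 0"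
  by (auto simp: ebin_def)
lemma equa_fst[simp]: "fst (equa j k) l = 0" and equa_snd[simp]: "snd (equa j k) l = (if l = j then k else 0)"
  by (auto simp: equa_def)

lemma Phi_lt: "i < a \<Longrightarrow> Phi a x i = fst x i" by (simp add: Phi_def)
lemma Phi_ev: "Phi a x (a + 2*j) = gray1 (snd x j)" by (simp add: Phi_def)
lemma Phi_od: "Phi a x (a + 2*j + 1) = gray2 (snd x j)" by (simp add: Phi_def)

lemma Phi_od2: "Phi a x (Suc (a + 2*j)) = gray2 (snd x j)" using Phi_od by simp

lemma idx_split: fixes a b p :: nat assumes "a \<le> p" "p < a + 2*b" shows "\<exists>j<b. p = a + 2*j \<or> p = a + 2*j + 1"
proof -
  define j where "j = (p - a) div 2"
  have "p - a = 2*j \<or> p - a = 2*j + 1" unfolding j_def by presburger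
  moreover have "j < b" unfolding j_def using assms by linarith
  ultimately show ?thesis using assms by (metis add.assoc le_add_diff_inverse)
qed

lemma gray_fact:
  fixes u w :: int assumes "u = 0 \<or> u = 1 \<or> u = 2 \<or> u = 3" "w = 0 \<or> w = 1 \<or> w = 2 \<or> w = 3"
  shows "((u - w) mod 4 = 0 \<longleftrightarrow> gray1 u = gray1 w \<and> gray2 u = gray2 w)"
    "((u - w) mod 4 = 2 \<longleftrightarrow> gray1 u \<noteq> gray1 w \<and> gray2 u \<noteq> gray2 w)"
    "(u - w) mod 4 = 0 \<or> (u - w) mod 4 = 1 \<or> (u - w) mod 4 = 2 \<or> (u - w) mod 4 = 3"
  using assms by (auto simp: gray1_def gray2_def)

lemma dist_iff:
  assumes x: "x \<in> V a b" and y: "y \<in> V a b"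
  shows "hdist (a + 2*b) (Phi a x) (Phi a y) \<le> 1 \<longleftrightarrow> isE a b (vsub x y)"
proof -
  define d where "d = vsub x y"
  define D where "D = {i. i < a + 2*b \<and> Phi a x i \<noteq> Phi a y i}"
  define G1 where "G1 j \<longleftrightarrow> gray1 (snd x j) \<noteq> gray1 (snd y j)" for j
  define G2 where "G2 j \<longleftrightarrow> gray2 (snd x j) \<noteq> gray2 (snd y j)" for j
  have dV: "d \<in> V a b" unfolding d_def using V_vsub[OF x y] .
  have finD: "finite D" unfolding D_def by simp
  have hd: "hdist (a + 2*b) (Phi a x) (Phi a y) = card D" unfolding hdist_def D_def ..
  have P1: "i \<in> D \<longleftrightarrow> fst d i \<noteq> 0" if "i < a" for i
    using that V_fst01[OF x, of i] V_fst01[OF y, of i] by (auto simp: D_def d_def Phi_lt)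
  have P2: "a + 2*j \<in> D \<longleftrightarrow> G1 j" "a + 2*j + 1 \<in> D \<longleftrightarrow> G2 j" if "j < b" for j
    using that by (auto simp: D_def G1_def G2_def Phi_ev Phi_od Phi_od2)
  have S0: "snd d j = 0 \<longleftrightarrow> \<not> G1 j \<and> \<not> G2 j" and S2: "snd d j = 2 \<longleftrightarrow> G1 j \<and> G2 j"
    and S03: "snd d j = 0 \<or> snd d j = 1 \<or> snd d j = 2 \<or> snd d j = 3" for j
    using gray_fact[OF V_snd03[OF x, of j] V_snd03[OF y, of j]] by (auto simp: d_def G1_def G2_def)
  have Dchar: "p \<in> D \<longleftrightarrow> (p < a \<and> fst d p \<noteq> 0) \<or> (\<exists>j<b. (p = a + 2*j \<and> G1 j) \<or> (p = a + 2*j + 1 \<and> G2 j))" for p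
  proof (cases "p < a")
    case True then show ?thesis using P1 by auto
  next
    case False
    show ?thesis
    proof (cases "p < a + 2*b")
      case True
      have "a \<le> p" using False by simp
      then obtain j where j: "j < b" "p = a + 2*j \<or> p = a + 2*j + 1" using idx_split[OF _ True] by blast
      then show ?thesis using P2 False j by (auto; presburger)
    next
      case False2: False
      then have "p \<notin> D" by (simp add: D_def)
      then show ?thesis using False False2 by auto
    qed
  qed
  have "card D \<le> 1 \<longleftrightarrow> (\<forall>p\<in>D. \<forall>q\<in>D. p = q)" using card_le_Suc0_iff_eq[OF finD] by simp
  also have "\<dots> \<longleftrightarrow> isE a b d"
  proof
    assume H: "\<forall>p\<in>D. \<forall>q\<in>D. p = q"
    show "isE a b d"
    proof (cases "\<exists>i<a. fst d i \<noteq> 0")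
      case True
      then obtain i where i: "i < a" "fst d i \<noteq> 0" by auto
      have iD: "i \<in> D" using P1 i by auto
      have "d = ebin i"
      proof (rule vec_eqI)
        fix l show "fst d l = fst (ebin i) l"
        proof (cases "l = i")
          case True then show ?thesis using i V_fst01[OF dV, of i] by auto
        next
          case ne: False
          show ?thesis
          proof (cases "l < a")
            case True then show ?thesis using ne P1[OF True] H iD by auto
          next
            case False then show ?thesis using V_fst_out[OF dV] ne by auto
          qed
        qed
      next
        fix l show "snd d l = snd (ebin i) l"
        proof (cases "l < b")
          case True
          show ?thesis
          proof (rule ccontr)
            assume "snd d l \<noteq> snd (ebin i) l"
            then have "G1 l \<or> G2 l" using S0 by auto
            then have "a + 2*l \<in> D \<or> a + 2*l + 1 \<in> D" using P2[OF True] by auto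
            then show False using H iD i(1) by fastforce
          qed
        next
          case False then show ?thesis using V_snd_out[OF dV] by auto
        qed
      qed
      then show ?thesis using i unfolding isE_def by auto
    next
      case False
      then have f0: "fst d l = 0" for l using V_fst_out[OF dV, of l] by (cases "l < a") auto
      show ?thesis
      proof (cases "\<exists>j<b. snd d j \<noteq> 0")
        case True
        then obtain j where j: "j < b" "snd d j \<noteq> 0" by auto
        have "\<not> (G1 j \<and> G2 j)"
        proof
          assume "G1 j \<and> G2 j"
          then have "a + 2*j \<in> D" "a + 2*j + 1 \<in> D" using P2[OF j(1)] by auto
          then show False using H by fastforce
        qed
        then have k: "snd d j \<in> {1,3}" using S2[of j] S03[of j] j by auto
        obtain pj where pj: "pj \<in> D" "pj = a + 2*j \<or> pj = a + 2*j + 1"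
          using S0[of j] j P2[OF j(1)] by auto
        have "d = equa j (snd d j)"
        proof (rule vec_eqI)
          fix l show "fst d l = fst (equa j (snd d j)) l" using f0 by simp
        next
          fix l show "snd d l = snd (equa j (snd d j)) l"
          proof (cases "l = j")
            case True then show ?thesis by simp
          next
            case ne: False
            show ?thesis
            proof (cases "l < b")
              case True
              show ?thesis
              proof (rule ccontr)
                assume "snd d l \<noteq> snd (equa j (snd d j)) l"
                then have "G1 l \<or> G2 l" using S0 ne by auto
                then obtain pl where "pl \<in> D" "pl = a + 2*l \<or> pl = a + 2*l + 1" using P2[OF True] by auto
                then show False using H pj ne by fastforce
              qed
            next
              case False then show ?thesis using V_snd_out[OF dV] ne by auto
            qed
          qed
        qed
        then show ?thesis using j k unfolding isE_def by blast
      next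
        case False2: False
        have "d = vzero"
        proof (rule vec_eqI)
          fix l show "fst d l = fst vzero l" using f0 by simp
        next
          fix l show "snd d l = snd vzero l" using False2 V_snd_out[OF dV, of l] by (cases "l < b") auto
        qed
        then show ?thesis by (simp add: isE_def)
      qed
    qed
  next
    assume E: "isE a b d"
    show "\<forall>p\<in>D. \<forall>q\<in>D. p = q"
    proof (intro ballI)
      fix p q assume p: "p \<in> D" and q: "q \<in> D"
      consider "d = vzero" | i where "i < a" "d = ebin i" | j k where "j < b" "k \<in> {1,3}" "d = equa j k"
        using E unfolding isE_def by blast
      then show "p = q"
      proof cases
        case 1
        then have "\<not> G1 j" "\<not> G2 j" for j using S0[of j] by auto
        then show ?thesis using p 1 Dchar[of p] by auto
      next
        case (2 i)
        then have "\<not> G1 j" "\<not> G2 j" for j using S0[of j] by auto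
        then have "p = i" "q = i" using p q 2 Dchar[of p] Dchar[of q] by (auto split: if_splits)
        then show ?thesis by simp
      next
        case (3 j k)
        have ne: "\<not> G1 l" "\<not> G2 l" if "l \<noteq> j" for l using S0[of l] 3 that by auto
        have "\<not> (G1 j \<and> G2 j)" using S2[of j] 3 by auto
        have pos: "(r = a + 2*j \<and> G1 j) \<or> (r = a + 2*j + 1 \<and> G2 j)" if rD: "r \<in> D" for r
        proof -
          have "\<not> (r < a \<and> fst d r \<noteq> 0)" using 3 by simp
          then obtain j' where j': "(r = a + 2*j' \<and> G1 j') \<or> (r = a + 2*j' + 1 \<and> G2 j')"
            using Dchar[of r] rD by blast
          then have "j' = j" using ne by blast
          then show ?thesis using j' by simp
        qed
        show ?thesis using pos[OF p] pos[OF q] \<open>\<not> (G1 j \<and> G2 j)\<close> by auto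
      qed
    qed
  qed
  finally show ?thesis using hd d_def by simp
qed

lemma isE_V: "isE a b e \<Longrightarrow> e \<in> V a b"
  unfolding isE_def V_iff by (auto split: if_splits)

lemma Phi_BV: assumes x: "x \<in> V a b" shows "Phi a x \<in> BV (a + 2*b)"
  unfolding BV_def
proof (intro CollectI allI)
  fix i
  show "if i < a + 2 * b then Phi a x i \<in> {0, 1} else Phi a x i = 0"
  proof (cases "i < a")
    case True then show ?thesis using V_fst01[OF x, of i] by (auto simp: Phi_lt)
  next
    case False
    then have "snd x ((i - a) div 2) = 0" if "\<not> i < a + 2*b" using V_snd_out[OF x] that by auto
    then show ?thesis using False by (auto simp: Phi_def gray1_def gray2_def)
  qed
qed

lemma Phi_inj: "inj_on (Phi a) (V a b)"
proof (rule inj_onI)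
  fix x y assume x: "x \<in> V a b" and y: "y \<in> V a b" and e: "Phi a x = Phi a y"
  show "x = y"
  proof (rule vec_eqI)
    fix i show "fst x i = fst y i"
      using e V_fst_out[OF x, of i] V_fst_out[OF y, of i] Phi_lt[of i a x] Phi_lt[of i a y]
      by (cases "i < a") auto
  next
    fix j
    have "gray1 (snd x j) = gray1 (snd y j)" "gray2 (snd x j) = gray2 (snd y j)"
      using e Phi_ev[of a x j] Phi_ev[of a y j] Phi_od[of a x j] Phi_od[of a y j] by metis+
    then show "snd x j = snd y j" using V_snd03[OF x, of j] V_snd03[OF y, of j]
      by (auto simp: gray1_def gray2_def)
  qed
qed

lemma card_Eset: "card {e. isE a b e} = 1 + a + 2*b"
proof -
  define A where "A = ebin ` {..<a}"
  define B where "B = (\<lambda>(j,k). equa j k) ` ({..<b} \<times> {1,3})"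
  have eq: "{e. isE a b e} = insert vzero (A \<union> B)" unfolding A_def B_def isE_def by auto
  have iA: "inj_on ebin {..<a}"
  proof (rule inj_onI)
    fix i i' assume "ebin i = ebin i'"
    then have "fst (ebin i) i = fst (ebin i') i" by simp
    then show "i = i'" by (simp split: if_splits)
  qed
  have iB: "inj_on (\<lambda>(j,k). equa j k) ({..<b} \<times> {1,3})"
  proof (rule inj_onI)
    fix p q assume p: "p \<in> {..<b} \<times> {1::int,3}" and q: "q \<in> {..<b} \<times> {1::int,3}"
      and e: "(\<lambda>(j,k). equa j k) p = (\<lambda>(j,k). equa j k) q"
    obtain j k j' k' where pq: "p = (j,k)" "q = (j',k')" by fastforce
    have "snd (equa j k) j = snd (equa j' k') j" "snd (equa j k) j' = snd (equa j' k') j'"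
      using e pq by auto
    then show "p = q" using p q pq by (auto split: if_splits)
  qed
  have cA: "card A = a" unfolding A_def using card_image[OF iA] by simp
  have cB: "card B = 2*b" unfolding B_def using card_image[OF iB] by (simp add: card_cartesian_product)
  have ne: "ebin i \<noteq> equa j k" for i j k
  proof
    assume "ebin i = equa j k"
    then have "fst (ebin i) i = fst (equa j k) i" by simp
    then show False by simp
  qed
  have dAB: "A \<inter> B = {}" unfolding A_def B_def using ne by (auto simp: eq_commute[of "equa _ _"])
  have z1: "vzero \<noteq> ebin i" for i
  proof
    assume "vzero = ebin i"
    then have "fst vzero i = fst (ebin i) i" by simp
    then show False by simp
  qed
  have z2: "vzero \<noteq> equa j k" if "k = 1 \<or> k = 3" for j k
  proof
    assume "vzero = equa j k"
    then have "snd vzero j = snd (equa j k) j" by simp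
    then show False using that by auto
  qed
  have z: "vzero \<notin> A \<union> B" unfolding A_def B_def using z1 z2 by auto
  have "finite A" "finite B" unfolding A_def B_def by auto
  then show ?thesis using eq z cA cB dAB by (simp add: card_Un_disjoint)
qed

locale pcode =
  fixes a b :: nat and C :: "z2z4vec set"
  assumes ac: "additive_code a b C"
    and perf: "perfect1 (a + 2*b) (Phi a ` C)"
begin

lemma CV: "C \<subseteq> V a b" using ac_sub[OF ac] .
lemma C0: "vzero \<in> C" using ac_zero[OF ac] .
lemma Cadd: "x \<in> C \<Longrightarrow> y \<in> C \<Longrightarrow> vadd x y \<in> C" using ac_add[OF ac] .
lemma Csub: "x \<in> C \<Longrightarrow> y \<in> C \<Longrightarrow> vsub x y \<in> C" using ac_sub2[OF ac] .

lemma modswap: "((A::int) - B) mod n = (D - E) mod n \<Longrightarrow> (B - E) mod n = (A - D) mod n"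
proof -
  assume "(A - B) mod n = (D - E) mod n"
  then have "n dvd ((A - B) - (D - E))" by (simp add: mod_eq_dvd_iff)
  moreover have "B - E - (A - D) = - ((A - B) - (D - E))" by simp
  ultimately have "n dvd (B - E - (A - D))" by (metis dvd_minus_iff)
  then show ?thesis by (simp add: mod_eq_dvd_iff)
qed

lemma decomp: assumes v: "v \<in> V a b" shows "\<exists>!c. c \<in> C \<and> isE a b (vsub v c)"
proof -
  have "\<exists>!c'. c' \<in> Phi a ` C \<and> hdist (a + 2*b) (Phi a v) c' \<le> 1"
    using perf Phi_BV[OF v] unfolding perfect1_def by blast
  then obtain c' where c': "c' \<in> Phi a ` C" "hdist (a + 2*b) (Phi a v) c' \<le> 1"
    and u: "\<And>c''. c'' \<in> Phi a ` C \<Longrightarrow> hdist (a + 2*b) (Phi a v) c'' \<le> 1 \<Longrightarrow> c'' = c'" by blast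
  obtain c where c: "c \<in> C" "c' = Phi a c" using c' by auto
  have cV: "c \<in> V a b" using c CV by auto
  have ex: "isE a b (vsub v c)" using c c' dist_iff[OF v cV] by simp
  show ?thesis
  proof (rule ex1I[of _ c])
    show "c \<in> C \<and> isE a b (vsub v c)" using c ex by simp
    fix d assume d: "d \<in> C \<and> isE a b (vsub v d)"
    then have "d \<in> V a b" using CV by auto
    then have "hdist (a + 2*b) (Phi a v) (Phi a d) \<le> 1" using dist_iff[OF v] d by auto
    then have "Phi a d = Phi a c" using u d c by auto
    then show "d = c" using Phi_inj[of a b] d c CV by (auto dest: inj_onD)
  qed
qed

definition cw :: "z2z4vec \<Rightarrow> z2z4vec" where
  "cw v = (THE c. c \<in> C \<and> isE a b (vsub v c))"
definition syn :: "z2z4vec \<Rightarrow> z2z4vec" where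
  "syn v = vsub v (cw v)"

lemma cw: assumes "v \<in> V a b" shows "cw v \<in> C" "isE a b (syn v)"
  using theI'[OF decomp[OF assms]] unfolding cw_def syn_def by auto

lemma cw_unique: "v \<in> V a b \<Longrightarrow> c \<in> C \<Longrightarrow> isE a b (vsub v c) \<Longrightarrow> cw v = c"
  unfolding cw_def using decomp by (simp add: the1_equality)

lemma syn_V: "v \<in> V a b \<Longrightarrow> syn v \<in> V a b" using isE_V cw by blast

lemma syn_self: "isE a b e \<Longrightarrow> syn e = e"
proof -
  assume e: "isE a b e"
  have eV: "e \<in> V a b" using isE_V[OF e] .
  have "vsub e vzero = e" using eV by (intro vec_eqI) (simp_all add: V_fst V_snd)
  then have "cw e = vzero" using cw_unique[OF eV C0] e by simp
  then show "syn e = e" unfolding syn_def using \<open>vsub e vzero = e\<close> by simp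
qed


lemma syn_eq: assumes v: "v \<in> V a b" and w: "w \<in> V a b"
  shows "syn v = syn w \<longleftrightarrow> vsub v w \<in> C"
proof
  assume e: "syn v = syn w"
  have "vsub (cw v) (cw w) \<in> C" using cw(1)[OF v] cw(1)[OF w] Csub by blast
  moreover have "vsub (cw v) (cw w) = vsub v w"
  proof (rule vec_eqI)
    fix i
    have "fst (syn v) i = fst (syn w) i" using e by simp
    then have "(fst v i - fst (cw v) i) mod 2 = (fst w i - fst (cw w) i) mod 2" by (simp add: syn_def)
    then have "(fst (cw v) i - fst (cw w) i) mod 2 = (fst v i - fst w i) mod 2" by (rule modswap)
    then show "fst (vsub (cw v) (cw w)) i = fst (vsub v w) i" by simp
  next
    fix j
    have "snd (syn v) j = snd (syn w) j" using e by simp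
    then have "(snd v j - snd (cw v) j) mod 4 = (snd w j - snd (cw w) j) mod 4" by (simp add: syn_def)
    then have "(snd (cw v) j - snd (cw w) j) mod 4 = (snd v j - snd w j) mod 4" by (rule modswap)
    then show "snd (vsub (cw v) (cw w)) j = snd (vsub v w) j" by simp
  qed
  ultimately show "vsub v w \<in> C" by simp
next
  assume d: "vsub v w \<in> C"
  define c' where "c' = vsub (cw v) (vsub v w)"
  have c'C: "c' \<in> C" unfolding c'_def using cw(1)[OF v] d Csub by blast
  have eq: "vsub w c' = syn v" unfolding c'_def syn_def
    by (rule vec_eqI) (simp_all add: mod_diff_right_eq)
  have "cw w = c'" using cw_unique[OF w c'C] eq cw(2)[OF v] by simp
  then show "syn v = syn w" using eq unfolding syn_def by simp
qed

end

lemma W0_double: "W0 a b = (\<lambda>v. vadd v v) ` V a b"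
proof
  show "(\<lambda>v. vadd v v) ` V a b \<subseteq> W0 a b"
  proof
    fix x assume "x \<in> (\<lambda>v. vadd v v) ` V a b"
    then obtain v where v: "v \<in> V a b" "x = vadd v v" by auto
    have "fst x = (\<lambda>_. 0)" using v by (auto simp: fun_eq_iff)
    moreover have "vadd x x = vzero" unfolding v(2) by (intro vec_eqI) (simp_all add: mod_simps)
    moreover have "x \<in> V a b" using v V_closed by blast
    ultimately show "x \<in> W0 a b" by (simp add: W0_def)
  qed
next
  show "W0 a b \<subseteq> (\<lambda>v. vadd v v) ` V a b"
  proof
    fix w assume w: "w \<in> W0 a b"
    then have wW: "w \<in> W a b" using W0_sub by blast
    then have wV: "w \<in> V a b" and ev: "\<And>j. even (snd w j)" by (auto simp: W_iff)
    have f0: "fst w = (\<lambda>_. 0)" using w by (simp add: W0_def)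
    define v :: z2z4vec where "v = ((\<lambda>_. 0::int), (\<lambda>j. snd w j div 2))"
    have s02: "snd w j = 0 \<or> snd w j = 2" for j using V_snd03[OF wV, of j] ev[of j] by auto
    have d01: "snd w j div 2 = 0 \<or> snd w j div 2 = 1" for j using s02[of j] by auto
    have "v \<in> V a b" unfolding v_def V_iff using d01 V_snd_out[OF wV] by (auto split: if_splits)
    moreover have "w = vadd v v"
    proof (rule vec_eqI)
      fix i show "fst w i = fst (vadd v v) i" using f0 by (simp add: v_def)
    next
      fix j show "snd w j = snd (vadd v v) j" using s02[of j] by (auto simp: v_def)
    qed
    ultimately show "w \<in> (\<lambda>v. vadd v v) ` V a b" by blast
  qed
qed

lemma even_mod4: "even ((z::int) mod 4) \<longleftrightarrow> even z" by presburger

lemma W_closed: "x \<in> W a b \<Longrightarrow> y \<in> W a b \<Longrightarrow> vadd x y \<in> W a b"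
  by (auto simp: W_iff V_closed even_mod4)
lemma W_vsub: "x \<in> W a b \<Longrightarrow> y \<in> W a b \<Longrightarrow> vsub x y \<in> W a b"
  by (auto simp: W_iff V_vsub even_mod4)
lemma W0_closed: "x \<in> W0 a b \<Longrightarrow> y \<in> W0 a b \<Longrightarrow> vadd x y \<in> W0 a b"
  using W_closed[of x a b y] W0_sub by (auto simp: W0_def W_def fun_eq_iff)

definition Wset :: "nat \<Rightarrow> z2z4vec set" where
  "Wset a = insert vzero (ebin ` {..<a})"

lemma card_Wset: "card (Wset a) = 1 + a"
proof -
  have iA: "inj_on ebin {..<a}"
  proof (rule inj_onI)
    fix i i' assume "ebin i = ebin i'"
    then have "fst (ebin i) i = fst (ebin i') i" by simp
    then show "i = i'" by (simp split: if_splits)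
  qed
  have z1: "vzero \<noteq> ebin i" for i
  proof
    assume "vzero = ebin i"
    then have "fst vzero i = fst (ebin i) i" by simp
    then show False by simp
  qed
  then have "vzero \<notin> ebin ` {..<a}" by auto
  then show ?thesis unfolding Wset_def using card_image[OF iA] by simp
qed

lemma Wset_isE: "e \<in> Wset a \<Longrightarrow> isE a b e" by (auto simp: Wset_def isE_def)
lemma Wset_W: "e \<in> Wset a \<Longrightarrow> e \<in> W a b"
  by (auto simp: Wset_def W_iff V_iff)

context pcode begin

lemma syn_image: "syn ` V a b = {e. isE a b e}"
proof
  show "syn ` V a b \<subseteq> {e. isE a b e}" using cw(2) by auto
  show "{e. isE a b e} \<subseteq> syn ` V a b"
  proof
    fix e assume "e \<in> {e. isE a b e}"
    then have "isE a b e" by simp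
    then show "e \<in> syn ` V a b" using syn_self isE_V by (metis image_eqI)
  qed
qed

lemma cnt_V: "card (V a b) = card {e. isE a b e} * card C"
proof -
  have "card (V a b) = card (syn ` V a b) * card C"
    by (rule fiber_count[OF order.refl CV finite_V]) (use CV V_closed syn_eq in auto)
  then show ?thesis by (simp add: syn_image)
qed

lemma double_E: assumes e: "isE a b e" and d: "vadd e e \<in> C" shows "e \<in> Wset a"
proof (rule ccontr)
  assume "e \<notin> Wset a"
  then obtain j k where jk: "j < b" "k = 1 \<or> k = 3" "e = equa j k"
    using e unfolding isE_def Wset_def by auto
  have "vadd e e = equa j 2" using jk by (intro vec_eqI) auto
  then have c2: "equa j 2 \<in> C" using d by simp
  have vV: "equa j 1 \<in> V a b" using jk(1) by (auto simp: V_iff)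
  have "isE a b (vsub (equa j 1) vzero)"
  proof -
    have "vsub (equa j 1) vzero = equa j 1" by (intro vec_eqI) auto
    then show ?thesis using jk(1) by (auto simp: isE_def)
  qed
  moreover have "isE a b (vsub (equa j 1) (equa j 2))"
  proof -
    have "vsub (equa j 1) (equa j 2) = equa j 3" by (intro vec_eqI) auto
    then show ?thesis using jk(1) unfolding isE_def by blast
  qed
  ultimately have "equa j 2 = vzero" using decomp[OF vV] C0 c2 by blast
  then have "snd (equa j 2) j = snd vzero j" by simp
  then show False by simp
qed

definition CW :: "z2z4vec set" where "CW = {v \<in> V a b. vadd v v \<in> C}"

lemma CW_sub: "CW \<subseteq> V a b" by (auto simp: CW_def)

lemma syn_CW: "syn ` CW = Wset a"
proof
  show "syn ` CW \<subseteq> Wset a"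
  proof
    fix e assume "e \<in> syn ` CW"
    then obtain v where v: "v \<in> V a b" "vadd v v \<in> C" "e = syn v" by (auto simp: CW_def)
    have "vadd e e = vsub (vadd v v) (vadd (cw v) (cw v))" unfolding v(3) syn_def
      by (rule vec_eqI; simp add: mod_simps; simp add: algebra_simps)
    moreover have "vadd (cw v) (cw v) \<in> C" using cw(1)[OF v(1)] Cadd by blast
    ultimately have "vadd e e \<in> C" using v Csub by simp
    then show "e \<in> Wset a" using double_E cw(2)[OF v(1)] v(3) by simp
  qed
  show "Wset a \<subseteq> syn ` CW"
  proof
    fix e assume e: "e \<in> Wset a"
    have eW: "e \<in> W a b" using Wset_W[OF e] .
    then have "vadd e e = vzero" "e \<in> V a b" by (auto simp: W_def)
    then have "e \<in> CW" using C0 by (simp add: CW_def)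
    moreover have "syn e = e" using syn_self Wset_isE[OF e] by blast
    ultimately show "e \<in> syn ` CW" by (metis image_eqI)
  qed
qed

lemma cnt_CW: "card CW = (1 + a) * card C"
proof -
  have "card CW = card (syn ` CW) * card C"
  proof (rule fiber_count[OF CW_sub CV])
    show "finite CW" using finite_subset[OF CW_sub finite_V] .
    show "vadd k x \<in> CW" if "x \<in> CW" "k \<in> C" for x k
    proof -
      have "vadd (vadd k x) (vadd k x) = vadd (vadd k k) (vadd x x)"
        by (rule vec_eqI; simp add: mod_simps; simp add: algebra_simps)
      moreover have "vadd k k \<in> C" "vadd x x \<in> C" using that Cadd by (auto simp: CW_def)
      moreover have "vadd k x \<in> V a b" using that CV V_closed CW_sub by blast
      ultimately show ?thesis using Cadd by (simp add: CW_def)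
    qed
    show "syn x = syn y \<longleftrightarrow> vsub x y \<in> C" if "x \<in> CW" "y \<in> CW" for x y
      using syn_eq that CW_sub by blast
  qed
  then show ?thesis by (simp add: syn_CW card_Wset)
qed

end

lemma W0_vsub: "x \<in> W0 a b \<Longrightarrow> y \<in> W0 a b \<Longrightarrow> vsub x y \<in> W0 a b"
  using W_vsub[of x a b y] W0_sub by (auto simp: W0_def W_def fun_eq_iff)

context pcode begin

lemma cnt_CapW: "card (W a b) = (1 + a) * card (C \<inter> W a b)"
proof -
  have "card (W a b) = card (syn ` W a b) * card (C \<inter> W a b)"
  proof (rule fiber_count[OF W_sub])
    show "C \<inter> W a b \<subseteq> V a b" using W_sub by blast
    show "finite (W a b)" using finite_subset[OF W_sub finite_V] .
    show "vadd k x \<in> W a b" if "x \<in> W a b" "k \<in> C \<inter> W a b" for x k using W_closed that by blast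
    show "syn x = syn y \<longleftrightarrow> vsub x y \<in> C \<inter> W a b" if "x \<in> W a b" "y \<in> W a b" for x y
      using syn_eq that W_sub W_vsub by blast
  qed
  moreover have "syn ` W a b = Wset a"
  proof
    have "W a b \<subseteq> CW" using C0 by (auto simp: W_def CW_def)
    then show "syn ` W a b \<subseteq> Wset a" using syn_CW by blast
    show "Wset a \<subseteq> syn ` W a b"
    proof
      fix e assume e: "e \<in> Wset a"
      then have "syn e = e" using syn_self Wset_isE by blast
      then show "e \<in> syn ` W a b" using Wset_W[OF e] by (metis image_eqI)
    qed
  qed
  ultimately show ?thesis by (simp add: card_Wset)
qed

lemma cnt_dbl: "card (V a b) = card (syn ` W0 a b) * card CW"
proof -
  have "card (V a b) = card ((\<lambda>v. syn (vadd v v)) ` V a b) * card CW"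
  proof (rule fiber_count[OF order.refl CW_sub finite_V])
    show "vadd k x \<in> V a b" if "x \<in> V a b" "k \<in> CW" for x k using V_closed that CW_sub by blast
    show "syn (vadd x x) = syn (vadd y y) \<longleftrightarrow> vsub x y \<in> CW" if x: "x \<in> V a b" and y: "y \<in> V a b" for x y
    proof -
      have "syn (vadd x x) = syn (vadd y y) \<longleftrightarrow> vsub (vadd x x) (vadd y y) \<in> C"
        using syn_eq V_closed x y by blast
      moreover have "vsub (vadd x x) (vadd y y) = vadd (vsub x y) (vsub x y)"
        by (rule vec_eqI; simp add: mod_simps; simp add: algebra_simps)
      ultimately show ?thesis using V_vsub[OF x y] by (simp add: CW_def)
    qed
  qed
  moreover have "(\<lambda>v. syn (vadd v v)) ` V a b = syn ` W0 a b" by (simp add: W0_double image_image)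
  ultimately show ?thesis by simp
qed

lemma cnt_CapW0: "card (W0 a b) = card (syn ` W0 a b) * card (C \<inter> W0 a b)"
proof (rule fiber_count)
  show "W0 a b \<subseteq> V a b" "C \<inter> W0 a b \<subseteq> V a b" using W_sub W0_sub by blast+
  show "finite (W0 a b)" using finite_subset[OF order.trans[OF W0_sub W_sub] finite_V] .
  show "vadd k x \<in> W0 a b" if "x \<in> W0 a b" "k \<in> C \<inter> W0 a b" for x k using W0_closed that by blast
  show "syn x = syn y \<longleftrightarrow> vsub x y \<in> C \<inter> W0 a b" if "x \<in> W0 a b" "y \<in> W0 a b" for x y
    using syn_eq that W_sub W0_sub W0_vsub by blast
qed

definition CW0 :: "z2z4vec set" where "CW0 = {v \<in> V a b. \<exists>w\<in>W0 a b. vsub v w \<in> C}"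
lemma CW0_sub: "CW0 \<subseteq> V a b" by (auto simp: CW0_def)

lemma cnt_CW0: "card CW0 = card (syn ` W0 a b) * card C"
proof -
  have "card CW0 = card (syn ` CW0) * card C"
  proof (rule fiber_count[OF CW0_sub CV])
    show "finite CW0" using finite_subset[OF CW0_sub finite_V] .
    show "vadd k x \<in> CW0" if "x \<in> CW0" "k \<in> C" for x k
    proof -
      have "\<exists>w\<in>W0 a b. vsub x w \<in> C" using that(1) by (simp add: CW0_def)
      then obtain w where w: "w \<in> W0 a b" "vsub x w \<in> C" by blast
      have "vsub (vadd k x) w = vadd k (vsub x w)"
        by (rule vec_eqI; simp add: mod_simps; simp add: algebra_simps)
      then have "vsub (vadd k x) w \<in> C" using Cadd that w by simp
      moreover have "vadd k x \<in> V a b" using that CV CW0_sub V_closed by blast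
      ultimately show ?thesis using w by (auto simp: CW0_def)
    qed
    show "syn x = syn y \<longleftrightarrow> vsub x y \<in> C" if "x \<in> CW0" "y \<in> CW0" for x y
      using syn_eq that CW0_sub by blast
  qed
  moreover have "syn ` CW0 = syn ` W0 a b"
  proof
    show "syn ` CW0 \<subseteq> syn ` W0 a b"
    proof
      fix e assume "e \<in> syn ` CW0"
      then obtain v w where v: "v \<in> V a b" "w \<in> W0 a b" "vsub v w \<in> C" "e = syn v" by (auto simp: CW0_def)
      have "w \<in> V a b" using v W_sub W0_sub by blast
      then have "syn v = syn w" using syn_eq v by blast
      then show "e \<in> syn ` W0 a b" using v by blast
    qed
    have "W0 a b \<subseteq> CW0"
    proof
      fix w assume w: "w \<in> W0 a b"
      then have "w \<in> V a b" using W_sub W0_sub by blast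
      moreover have "vsub w w \<in> C" using C0 by simp
      ultimately show "w \<in> CW0" using w unfolding CW0_def by blast
    qed
    then show "syn ` W0 a b \<subseteq> syn ` CW0" by blast
  qed
  ultimately show ?thesis by simp
qed

end

lemma sum_mod_cong: "(\<And>i. i \<in> A \<Longrightarrow> (f i::int) mod n = g i mod n) \<Longrightarrow> sum f A mod n = sum g A mod n"
proof -
  assume h: "\<And>i. i \<in> A \<Longrightarrow> f i mod n = g i mod n"
  have "sum f A mod n = (\<Sum>i\<in>A. f i mod n) mod n" by (simp add: mod_sum_eq)
  also have "\<dots> = (\<Sum>i\<in>A. g i mod n) mod n" using h by (simp cong: sum.cong)
  also have "\<dots> = sum g A mod n" by (simp add: mod_sum_eq)
  finally show ?thesis .
qed

lemma inner_alt: "inner24 a b x y = ((\<Sum>i<a. 2 * fst x i * fst y i) + (\<Sum>j<b. snd x j * snd y j)) mod 4"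
  by (simp add: inner24_def sum_distrib_left mult.assoc)

lemma inner_sym: "inner24 a b x y = inner24 a b y x"
  by (simp add: inner24_def mult.commute)

lemma two_mod: "(2 * ((p::int) mod 2) * q) mod 4 = (2 * p * q) mod 4"
proof -
  have "2 * (p mod 2) * q = 2 * p * q + 4 * (- (p div 2) * q)"
    by (simp add: algebra_simps minus_div_mult_eq_mod[symmetric])
  then show ?thesis by (simp add: mod_eq_dvd_iff)
qed

lemma four_mod: "(((p::int) mod 4) * q) mod 4 = (p * q) mod 4"
  by (simp add: mod_mult_left_eq)

lemma inner_add: "inner24 a b (vadd x x') y = (inner24 a b x y + inner24 a b x' y) mod 4"
proof -
  have "inner24 a b (vadd x x') y =
     ((\<Sum>i<a. 2 * ((fst x i + fst x' i) mod 2) * fst y i) + (\<Sum>j<b. ((snd x j + snd x' j) mod 4) * snd y j)) mod 4"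
    by (simp add: inner_alt)
  also have "\<dots> = ((\<Sum>i<a. 2 * (fst x i + fst x' i) * fst y i) + (\<Sum>j<b. (snd x j + snd x' j) * snd y j)) mod 4"
    apply (rule mod_add_cong)
     apply (rule sum_mod_cong) apply (rule two_mod)
    apply (rule sum_mod_cong) apply (rule four_mod)
    done
  also have "\<dots> = ((\<Sum>i<a. 2 * fst x i * fst y i) + (\<Sum>j<b. snd x j * snd y j)
      + ((\<Sum>i<a. 2 * fst x' i * fst y i) + (\<Sum>j<b. snd x' j * snd y j))) mod 4"
    by (simp add: algebra_simps sum.distrib)
  also have "\<dots> = (inner24 a b x y + inner24 a b x' y) mod 4"
    by (simp add: inner_alt mod_add_eq)
  finally show ?thesis .
qed

lemma inner_add2: "inner24 a b x (vadd y y') = (inner24 a b x y + inner24 a b x y') mod 4"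
  using inner_add[of a b y y' x] inner_sym by metis

lemma inner_zero[simp]: "inner24 a b vzero y = 0" "inner24 a b x vzero = 0"
  by (simp_all add: inner24_def)

lemma inner_range: "0 \<le> inner24 a b x y" "inner24 a b x y < 4"
  by (simp_all add: inner24_def)

definition ipow :: "int \<Rightarrow> complex" where "ipow z = \<i> ^ nat (z mod 4)"

lemma ii_pow_mod: "\<i> ^ m = \<i> ^ (m mod 4)"
proof -
  have e: "4 * (m div 4) + m mod 4 = m" by (rule mult_div_mod_eq)
  have "\<i> ^ m = \<i> ^ (4 * (m div 4) + m mod 4)" by (simp only: e)
  also have "\<dots> = (\<i> ^ 4) ^ (m div 4) * \<i> ^ (m mod 4)" by (simp only: power_add power_mult)
  also have "\<dots> = \<i> ^ (m mod 4)" by simp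
  finally show ?thesis .
qed

lemma ipow_add: "ipow (z + w) = ipow z * ipow w"
proof -
  have "nat ((z + w) mod 4) = (nat (z mod 4) + nat (w mod 4)) mod 4"
  proof -
    have "(z + w) mod 4 = (z mod 4 + w mod 4) mod 4" by (simp add: mod_add_eq)
    also have "\<dots> = int ((nat (z mod 4) + nat (w mod 4)) mod 4)" by (simp add: zmod_int)
    finally show ?thesis by simp
  qed
  then show ?thesis unfolding ipow_def using ii_pow_mod by (simp add: power_add)
qed

lemma ipow_mod: "ipow (z mod 4) = ipow z" by (simp add: ipow_def)
lemma ipow_0[simp]: "ipow 0 = 1" by (simp add: ipow_def)
lemma ipow_ne1: assumes "z mod 4 \<noteq> 0" shows "ipow z \<noteq> 1"
proof -
  have "z mod 4 = 1 \<or> z mod 4 = 2 \<or> z mod 4 = 3" using assms by auto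
  then show ?thesis unfolding ipow_def by (auto simp: eval_nat_numeral complex_eq_iff)
qed

lemma chi_add: "ipow (inner24 a b (vadd x x') y) = ipow (inner24 a b x y) * ipow (inner24 a b x' y)"
  by (simp add: inner_add ipow_mod ipow_add)
lemma chi_add2: "ipow (inner24 a b x (vadd y y')) = ipow (inner24 a b x y) * ipow (inner24 a b x y')"
  by (simp add: inner_add2 ipow_mod ipow_add)

lemma ac_V: "additive_code a b (V a b)"
  by (simp add: additive_code_def V_closed)

lemma translate_image: assumes D: "additive_code a b D" and x0: "x0 \<in> D"
  shows "(\<lambda>x. vadd x0 x) ` D = D"
proof -
  have sub: "(\<lambda>x. vadd x0 x) ` D \<subseteq> D" using ac_add[OF D x0] by auto
  have inj: "inj_on (\<lambda>x. vadd x0 x) D" by (rule inj_onI) (use ac_sub[OF D] vadd_cancel2 in blast)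
  have "card ((\<lambda>x. vadd x0 x) ` D) = card D" using card_image[OF inj] .
  then show ?thesis using card_subset_eq[OF ac_finite[OF D] sub] by simp
qed

lemma translate_sum: assumes D: "additive_code a b D" and x0: "x0 \<in> D"
  shows "sum f D = (\<Sum>x\<in>D. f (vadd x0 x))"
proof -
  have inj: "inj_on (\<lambda>x. vadd x0 x) D" by (rule inj_onI) (use ac_sub[OF D] vadd_cancel2 in blast)
  have "sum f D = sum f ((\<lambda>x. vadd x0 x) ` D)" using translate_image[OF D x0] by simp
  also have "\<dots> = (\<Sum>x\<in>D. f (vadd x0 x))" using sum.reindex[OF inj] by simp
  finally show ?thesis .
qed

lemma char_sum1: assumes D: "additive_code a b D" and y: "y \<in> V a b" and ny: "y \<notin> dual a b D"
  shows "(\<Sum>x\<in>D. ipow (inner24 a b x y)) = 0"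
proof -
  obtain x0 where x0: "x0 \<in> D" "inner24 a b x0 y \<noteq> 0" using y ny by (auto simp: dual_def)
  define S where "S = (\<Sum>x\<in>D. ipow (inner24 a b x y))"
  have "S = (\<Sum>x\<in>D. ipow (inner24 a b (vadd x0 x) y))" unfolding S_def by (rule translate_sum[OF D x0(1)])
  also have "\<dots> = ipow (inner24 a b x0 y) * S" unfolding S_def by (simp add: chi_add sum_distrib_left)
  finally have "(1 - ipow (inner24 a b x0 y)) * S = 0" by (simp add: algebra_simps)
  moreover have "ipow (inner24 a b x0 y) \<noteq> 1" using x0(2) inner_range[of a b x0 y] by (intro ipow_ne1) simp
  ultimately show ?thesis unfolding S_def by simp
qed

lemma char_sum2: assumes x: "x \<in> V a b" and nx: "x \<noteq> vzero"
  shows "(\<Sum>y\<in>V a b. ipow (inner24 a b x y)) = 0"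
proof -
  have "\<exists>y0\<in>V a b. inner24 a b x y0 \<noteq> 0"
  proof (cases "\<exists>i<a. fst x i \<noteq> 0")
    case True
    then obtain i where i: "i < a" "fst x i \<noteq> 0" by auto
    then have "fst x i = 1" using V_fst01[OF x, of i] by auto
    moreover have "inner24 a b x (ebin i) = (2 * fst x i) mod 4"
      using i by (simp add: inner24_def if_distrib[of "\<lambda>z. _ * z"] sum.delta cong: if_cong)
    moreover have "ebin i \<in> V a b" using i by (auto simp: V_iff)
    ultimately show ?thesis by force
  next
    case False
    then have f0: "fst x i = 0" for i using V_fst_out[OF x, of i] by (cases "i < a") auto
    have "\<exists>j. snd x j \<noteq> 0"
    proof (rule ccontr)
      assume "\<not> (\<exists>j. snd x j \<noteq> 0)"
      then have "x = vzero" using f0 by (intro vec_eqI) auto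
      then show False using nx by simp
    qed
    then obtain j where j: "snd x j \<noteq> 0" by auto
    then have jb: "j < b" using V_snd_out[OF x, of j] by auto
    have "inner24 a b x (equa j 1) = snd x j mod 4"
      using jb f0 by (simp add: inner24_def if_distrib[of "\<lambda>z. _ * z"] sum.delta cong: if_cong)
    moreover have "snd x j mod 4 \<noteq> 0" using j V_snd[OF x, of j] by simp
    moreover have "equa j 1 \<in> V a b" using jb by (auto simp: V_iff)
    ultimately show ?thesis by force
  qed
  then obtain y0 where y0: "y0 \<in> V a b" "inner24 a b x y0 \<noteq> 0" by blast
  define S where "S = (\<Sum>y\<in>V a b. ipow (inner24 a b x y))"
  have "S = (\<Sum>y\<in>V a b. ipow (inner24 a b x (vadd y0 y)))" unfolding S_def by (rule translate_sum[OF ac_V y0(1)])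
  also have "\<dots> = ipow (inner24 a b x y0) * S" unfolding S_def by (simp add: chi_add2 sum_distrib_left)
  finally have "(1 - ipow (inner24 a b x y0)) * S = 0" by (simp add: algebra_simps)
  moreover have "ipow (inner24 a b x y0) \<noteq> 1" using y0(2) inner_range[of a b x y0] by (intro ipow_ne1) simp
  ultimately show ?thesis unfolding S_def by simp
qed

lemma dual_card: assumes D: "additive_code a b D"
  shows "card D * card (dual a b D) = card (V a b)"
proof -
  have DV: "D \<subseteq> V a b" using ac_sub[OF D] .
  have finD: "finite D" using ac_finite[OF D] .
  have dV: "dual a b D \<subseteq> V a b" by (auto simp: dual_def)
  have "(\<Sum>y\<in>V a b. \<Sum>x\<in>D. ipow (inner24 a b x y)) = (\<Sum>y\<in>V a b. if y \<in> dual a b D then of_nat (card D) else 0)"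
  proof (rule sum.cong)
    fix y assume y: "y \<in> V a b"
    show "(\<Sum>x\<in>D. ipow (inner24 a b x y)) = (if y \<in> dual a b D then of_nat (card D) else 0)"
    proof (cases "y \<in> dual a b D")
      case True
      then have "\<forall>x\<in>D. inner24 a b x y = 0" by (simp add: dual_def)
      then show ?thesis using True by simp
    next
      case False then show ?thesis using char_sum1[OF D y] by simp
    qed
  qed simp
  also have "\<dots> = of_nat (card (dual a b D) * card D)"
    using dV by (simp add: sum.If_cases Int_absorb1)
  finally have 1: "(\<Sum>y\<in>V a b. \<Sum>x\<in>D. ipow (inner24 a b x y)) = of_nat (card (dual a b D) * card D)" .
  have "(\<Sum>x\<in>D. \<Sum>y\<in>V a b. ipow (inner24 a b x y)) = (\<Sum>x\<in>D. if x = vzero then of_nat (card (V a b)) else 0)"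
  proof (rule sum.cong)
    fix x assume x: "x \<in> D"
    show "(\<Sum>y\<in>V a b. ipow (inner24 a b x y)) = (if x = vzero then of_nat (card (V a b)) else 0)"
      using char_sum2[of x a b] x DV by auto
  qed simp
  also have "\<dots> = of_nat (card (V a b))" using ac_zero[OF D] finD by (simp add: sum.delta)
  finally have 2: "(\<Sum>x\<in>D. \<Sum>y\<in>V a b. ipow (inner24 a b x y)) = of_nat (card (V a b))" .
  have "(of_nat (card (dual a b D) * card D) :: complex) = of_nat (card (V a b))"
  proof -
    have "(\<Sum>y\<in>V a b. \<Sum>x\<in>D. ipow (inner24 a b x y)) = (\<Sum>x\<in>D. \<Sum>y\<in>V a b. ipow (inner24 a b x y))"
      by (rule sum.swap)
    then show ?thesis using 1 2 by simp
  qed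
  then show ?thesis by (simp only: of_nat_eq_iff mult.commute)
qed

lemma dual_ac: "additive_code a b (dual a b D)"
  unfolding additive_code_def dual_def
  by (auto simp: V_closed inner_add2)

lemma inner_ebin: "inner24 a b (ebin i) y = (2 * fst y i) mod 4" if "i < a"
  using that by (simp add: inner24_def if_distrib[of "\<lambda>z. z * _"] sum.delta cong: if_cong)

lemma inner_equa: "inner24 a b (equa j k) y = (k * snd y j) mod 4" if "j < b"
  using that by (simp add: inner24_def if_distrib[of "\<lambda>z. z * _"] sum.delta cong: if_cong)

lemma inner_W_W0: assumes e: "e \<in> W a b" and y: "y \<in> W0 a b" shows "inner24 a b e y = 0"
proof -
  have f0: "fst y = (\<lambda>_. 0)" and yW: "y \<in> W a b" using y by (auto simp: W0_def W_def)
  have "4 dvd (\<Sum>j<b. snd e j * snd y j)"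
  proof (rule dvd_sum)
    fix j
    have "even (snd e j)" "even (snd y j)" using e yW by (auto simp: W_iff)
    then show "4 dvd snd e j * snd y j" by (auto elim!: evenE)
  qed
  then show ?thesis by (simp add: inner_alt f0)
qed

lemma ebin_dbl: "vadd (ebin i) (ebin i) = vzero" by (rule vec_eqI) auto
lemma equa2_dbl: "vadd (equa j 2) (equa j 2) = vzero" by (rule vec_eqI) auto

lemma fst_zero_from_inner: assumes y: "y \<in> V a b" and i: "i < a" and h: "(2 * fst y i) mod 4 = 0"
  shows "fst y i = 0"
  using V_fst01[OF y, of i] h by auto

lemma snd_even_from_inner: assumes y: "y \<in> V a b" and h: "(2 * snd y j) mod 4 = 0"
  shows "even (snd y j)"
  using V_snd03[OF y, of j] h by auto

context pcode begin

lemma C_sub_CW: "C \<subseteq> CW" using CV Cadd by (auto simp: CW_def)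
lemma C_sub_CW0: "C \<subseteq> CW0"
proof
  fix c assume c: "c \<in> C"
  have "vsub c vzero = c" using c CV by (intro vec_eqI) (auto simp: V_fst V_snd)
  moreover have "vzero \<in> W0 a b" by (auto simp: W0_def vzero_def vadd_def V_def)
  ultimately show "c \<in> CW0" using c CV by (auto simp: CW0_def intro!: bexI[of _ vzero])
qed

lemma CW_ac: "additive_code a b CW"
  unfolding additive_code_def
proof (intro conjI ballI)
  show "CW \<subseteq> V a b" using CW_sub .
  show "vzero \<in> CW" using C0 by (simp add: CW_def)
  fix x y assume x: "x \<in> CW" and y: "y \<in> CW"
  have "vadd (vadd x y) (vadd x y) = vadd (vadd x x) (vadd y y)"
    by (rule vec_eqI; simp add: mod_simps; simp add: algebra_simps)
  then show "vadd x y \<in> CW" using x y Cadd V_closed by (auto simp: CW_def)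
qed

lemma CW0_ac: "additive_code a b CW0"
  unfolding additive_code_def
proof (intro conjI ballI)
  show "CW0 \<subseteq> V a b" using CW0_sub .
  show "vzero \<in> CW0" using C0 C_sub_CW0 by blast
  fix x y assume x: "x \<in> CW0" and y: "y \<in> CW0"
  obtain w where w: "w \<in> W0 a b" "vsub x w \<in> C" using x by (auto simp: CW0_def)
  obtain w' where w': "w' \<in> W0 a b" "vsub y w' \<in> C" using y by (auto simp: CW0_def)
  have "vsub (vadd x y) (vadd w w') = vadd (vsub x w) (vsub y w')"
    by (rule vec_eqI; simp add: mod_simps; simp add: algebra_simps)
  then have "vsub (vadd x y) (vadd w w') \<in> C" using w w' Cadd by simp
  moreover have "vadd w w' \<in> W0 a b" using W0_closed w w' by blast
  moreover have "vadd x y \<in> V a b" using x y CW0_sub V_closed by blast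
  ultimately show "vadd x y \<in> CW0" unfolding CW0_def by blast
qed

lemma dual_mono: "A \<subseteq> B \<Longrightarrow> dual a b B \<subseteq> dual a b A"
  by (auto simp: dual_def)

lemma dual_CW: "dual a b CW = dual a b C \<inter> W0 a b"
proof
  show "dual a b CW \<subseteq> dual a b C \<inter> W0 a b"
  proof
    fix y assume y: "y \<in> dual a b CW"
    then have yV: "y \<in> V a b" and orth: "\<And>x. x \<in> CW \<Longrightarrow> inner24 a b x y = 0" by (auto simp: dual_def)
    have "y \<in> dual a b C" using y dual_mono[OF C_sub_CW] by blast
    moreover have "fst y i = 0" for i
    proof (cases "i < a")
      case True
      have "ebin i \<in> CW" using True C0 by (auto simp: CW_def ebin_dbl V_iff)
      then have "(2 * fst y i) mod 4 = 0" using orth inner_ebin[OF True] by metis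
      then show ?thesis using fst_zero_from_inner[OF yV True] by simp
    next
      case False then show ?thesis using V_fst_out[OF yV] by simp
    qed
    moreover have "even (snd y j)" for j
    proof (cases "j < b")
      case True
      have "equa j 2 \<in> CW" using True C0 by (auto simp: CW_def equa2_dbl V_iff)
      then have "(2 * snd y j) mod 4 = 0" using orth inner_equa[OF True] by metis
      then show ?thesis using snd_even_from_inner[OF yV] by simp
    next
      case False then show ?thesis using V_snd_out[OF yV] by simp
    qed
    ultimately have "y \<in> W a b" "fst y = (\<lambda>_. 0)" "y \<in> dual a b C" using yV by (auto simp: W_iff)
    then show "y \<in> dual a b C \<inter> W0 a b" by (auto simp: W0_def W_def)
  qed
  show "dual a b C \<inter> W0 a b \<subseteq> dual a b CW"
  proof
    fix y assume y: "y \<in> dual a b C \<inter> W0 a b"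
    have "inner24 a b v y = 0" if v: "v \<in> CW" for v
    proof -
      have vV: "v \<in> V a b" using v CW_sub by blast
      have "vadd (cw v) (syn v) = v" unfolding syn_def using vadd_vsub_cancel[OF vV] vadd_comm by metis
      moreover have "inner24 a b (cw v) y = 0" using y cw(1)[OF vV] by (auto simp: dual_def)
      moreover have "syn v \<in> W a b" using syn_CW v Wset_W by blast
      then have "inner24 a b (syn v) y = 0" using inner_W_W0 y by blast
      ultimately show ?thesis using inner_add[of a b "cw v" "syn v" y] by simp
    qed
    then show "y \<in> dual a b CW" using y by (auto simp: dual_def)
  qed
qed

lemma dual_CW0: "dual a b CW0 = dual a b C \<inter> W a b"
proof
  show "dual a b CW0 \<subseteq> dual a b C \<inter> W a b"
  proof
    fix y assume y: "y \<in> dual a b CW0"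
    then have yV: "y \<in> V a b" and orth: "\<And>x. x \<in> CW0 \<Longrightarrow> inner24 a b x y = 0" by (auto simp: dual_def)
    have "y \<in> dual a b C" using y dual_mono[OF C_sub_CW0] by blast
    moreover have "even (snd y j)" for j
    proof (cases "j < b")
      case True
      have "equa j 2 \<in> W0 a b" using True by (auto simp: W0_def equa2_dbl V_iff)
      moreover have "W0 a b \<subseteq> CW0"
      proof
        fix w assume w: "w \<in> W0 a b"
        then have "w \<in> V a b" using W_sub W0_sub by blast
        moreover have "vsub w w \<in> C" using C0 by simp
        ultimately show "w \<in> CW0" using w unfolding CW0_def by blast
      qed
      ultimately have "equa j 2 \<in> CW0" by blast
      then have "(2 * snd y j) mod 4 = 0" using orth inner_equa[OF True] by metis
      then show ?thesis using snd_even_from_inner[OF yV] by simp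
    next
      case False then show ?thesis using V_snd_out[OF yV] by simp
    qed
    ultimately show "y \<in> dual a b C \<inter> W a b" using yV by (auto simp: W_iff)
  qed
  show "dual a b C \<inter> W a b \<subseteq> dual a b CW0"
  proof
    fix y assume y: "y \<in> dual a b C \<inter> W a b"
    have "inner24 a b v y = 0" if v: "v \<in> CW0" for v
    proof -
      obtain w where w: "w \<in> W0 a b" "vsub v w \<in> C" using v by (auto simp: CW0_def)
      have vV: "v \<in> V a b" using v CW0_sub by blast
      have "vadd (vsub v w) w = v" using vadd_vsub_cancel[OF vV] .
      moreover have "inner24 a b (vsub v w) y = 0" using y w by (auto simp: dual_def)
      moreover have "inner24 a b y w = 0" using inner_W_W0[of y a b w] y w by blast
      then have "inner24 a b w y = 0" by (simp add: inner_sym)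
      ultimately show ?thesis using inner_add[of a b "vsub v w" w y] by simp
    qed
    then show "y \<in> dual a b CW0" using y by (auto simp: dual_def)
  qed
qed

end

definition psum :: "z2z4vec set \<Rightarrow> z2z4vec" where
  "psum S = ((\<lambda>i. (\<Sum>x\<in>S. fst x i) mod 2), (\<lambda>j. (\<Sum>x\<in>S. snd x j) mod 4))"

lemma psum_empty[simp]: "psum {} = vzero" by (simp add: psum_def vzero_def)

lemma psum_insert: "finite T \<Longrightarrow> x \<notin> T \<Longrightarrow> psum (insert x T) = vadd x (psum T)"
  by (rule vec_eqI) (simp_all add: psum_def mod_simps)

lemma psum_single: "x \<in> V a b \<Longrightarrow> psum {x} = x"
  by (rule vec_eqI) (simp_all add: psum_def V_fst V_snd)

lemma psum_W: "finite T \<Longrightarrow> T \<subseteq> W a b \<Longrightarrow> psum T \<in> W a b"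
proof (induction T rule: finite_induct)
  case empty then show ?case by (auto simp: W_def)
next
  case (insert x F) then show ?case using psum_insert W_closed by auto
qed

lemma W_vadd_eq0: assumes u: "u \<in> W a b" and v: "v \<in> W a b"
  shows "vadd u v = vzero \<longleftrightarrow> u = v"
proof
  assume e: "vadd u v = vzero"
  have uV: "u \<in> V a b" and vV: "v \<in> V a b" using u v W_sub by auto
  have "vadd u (vadd u v) = u" using e uV by simp
  moreover have "vadd u (vadd u v) = v" using u vV by (simp add: vadd_assoc[symmetric] W_def)
  ultimately show "u = v" by simp
next
  assume "u = v" then show "vadd u v = vzero" using v by (simp add: W_def)
qed

lemma psum_symdiff: assumes T: "finite T" "T \<subseteq> W a b" and T': "finite T'" "T' \<subseteq> W a b"
  shows "vadd (psum T) (psum T') = psum ((T - T') \<union> (T' - T))"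
proof (rule vec_eqI)
  fix i
  let ?f = "\<lambda>x::z2z4vec. fst x i"
  have "sum ?f T = sum ?f (T \<inter> T') + sum ?f (T - T')" using T by (simp add: sum.Int_Diff)
  moreover have "sum ?f T' = sum ?f (T \<inter> T') + sum ?f (T' - T)"
    using T' sum.Int_Diff[OF T'(1), of ?f T] by (simp add: Int_commute)
  moreover have "sum ?f ((T - T') \<union> (T' - T)) = sum ?f (T - T') + sum ?f (T' - T)"
    using T T' by (intro sum.union_disjoint) auto
  ultimately show "fst (vadd (psum T) (psum T')) i = fst (psum ((T - T') \<union> (T' - T))) i"
    by (simp add: psum_def mod_simps; simp add: algebra_simps)
next
  fix j
  let ?f = "\<lambda>x::z2z4vec. snd x j"
  have "sum ?f T = sum ?f (T \<inter> T') + sum ?f (T - T')" using T by (simp add: sum.Int_Diff)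
  moreover have "sum ?f T' = sum ?f (T \<inter> T') + sum ?f (T' - T)"
    using T' sum.Int_Diff[OF T'(1), of ?f T] by (simp add: Int_commute)
  moreover have "sum ?f ((T - T') \<union> (T' - T)) = sum ?f (T - T') + sum ?f (T' - T)"
    using T T' by (intro sum.union_disjoint) auto
  moreover have "even (sum ?f (T \<inter> T'))" using T by (intro dvd_sum) (auto simp: W_iff)
  ultimately show "snd (vadd (psum T) (psum T')) j = snd (psum ((T - T') \<union> (T' - T))) j"
    by (auto simp: psum_def mod_simps elim!: evenE; simp add: algebra_simps)
qed

definition indep :: "z2z4vec set \<Rightarrow> bool" where "indep B \<longleftrightarrow> inj_on psum (Pow B)"
definition bspan :: "z2z4vec set \<Rightarrow> z2z4vec set" where "bspan B = psum ` Pow B"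

lemma psum_eq_iff: assumes "finite T" "T \<subseteq> W a b" "finite T'" "T' \<subseteq> W a b"
  shows "psum T = psum T' \<longleftrightarrow> psum ((T - T') \<union> (T' - T)) = vzero"
  using psum_symdiff[OF assms] W_vadd_eq0[OF psum_W psum_W] assms by metis

lemma indep_iff: assumes "finite B" "B \<subseteq> W a b"
  shows "indep B \<longleftrightarrow> (\<forall>T\<subseteq>B. psum T = vzero \<longrightarrow> T = {})"
proof
  assume "indep B"
  then show "\<forall>T\<subseteq>B. psum T = vzero \<longrightarrow> T = {}"
    unfolding indep_def by (metis Pow_iff empty_subsetI inj_onD psum_empty)
next
  assume h: "\<forall>T\<subseteq>B. psum T = vzero \<longrightarrow> T = {}"
  show "indep B" unfolding indep_def
  proof (rule inj_onI)
    fix T T' assume "T \<in> Pow B" "T' \<in> Pow B" "psum T = psum T'"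
    moreover have "finite T" "finite T'" "T \<subseteq> W a b" "T' \<subseteq> W a b"
      using calculation assms finite_subset by auto
    ultimately have "psum ((T - T') \<union> (T' - T)) = vzero" using psum_eq_iff by blast
    moreover have "(T - T') \<union> (T' - T) \<subseteq> B" using \<open>T \<in> Pow B\<close> \<open>T' \<in> Pow B\<close> by auto
    ultimately have "(T - T') \<union> (T' - T) = {}" using h by blast
    then show "T = T'" by blast
  qed
qed

lemma card_bspan: "finite B \<Longrightarrow> indep B \<Longrightarrow> card (bspan B) = 2 ^ card B"
  by (simp add: bspan_def indep_def card_image card_Pow)

lemma bspan_mono: "A \<subseteq> B \<Longrightarrow> bspan A \<subseteq> bspan B" by (auto simp: bspan_def)

lemma in_bspan: "x \<in> B \<Longrightarrow> B \<subseteq> V a b \<Longrightarrow> x \<in> bspan B"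
proof -
  assume x: "x \<in> B" and BV: "B \<subseteq> V a b"
  have "psum {x} = x" using psum_single[of x a b] x BV by blast
  moreover have "{x} \<in> Pow B" using x by simp
  ultimately show "x \<in> bspan B" unfolding bspan_def by (metis image_eqI)
qed

lemma bspan_closed: assumes B: "finite B" "B \<subseteq> W a b" and x: "x \<in> bspan B" and y: "y \<in> bspan B"
  shows "vadd x y \<in> bspan B"
proof -
  obtain T T' where T: "T \<subseteq> B" "x = psum T" and T': "T' \<subseteq> B" "y = psum T'" using x y by (auto simp: bspan_def)
  have "vadd x y = psum ((T - T') \<union> (T' - T))"
    using psum_symdiff[of T a b T'] T T' B finite_subset[OF T(1) B(1)] finite_subset[OF T'(1) B(1)] by auto
  moreover have "(T - T') \<union> (T' - T) \<subseteq> B" using T T' by auto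
  ultimately show ?thesis by (auto simp: bspan_def)
qed

lemma psum_remove: "finite T \<Longrightarrow> s \<in> T \<Longrightarrow> psum T = vadd s (psum (T - {s}))"
  using psum_insert[of "T - {s}" s] by (simp add: insert_absorb)

lemma ext_basis:
  assumes B0: "finite B0" "B0 \<subseteq> W a b" "indep B0"
  shows "finite S \<Longrightarrow> S \<subseteq> W a b \<Longrightarrow> \<exists>B. B0 \<subseteq> B \<and> B \<subseteq> B0 \<union> S \<and> indep B \<and> bspan B = bspan (B0 \<union> S)"
proof (induction S rule: finite_induct)
  case empty then show ?case using B0 by auto
next
  case (insert s S)
  then obtain B where B: "B0 \<subseteq> B" "B \<subseteq> B0 \<union> S" "indep B" "bspan B = bspan (B0 \<union> S)" by auto
  have finB: "finite B" using finite_subset[OF B(2)] B0(1) insert(1) by simp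
  have BW: "B \<subseteq> W a b" using B(2) B0(2) insert(4) by auto
  have sW: "s \<in> W a b" using insert(4) by auto
  have BV: "B \<subseteq> V a b" using BW W_sub by blast
  show ?case
  proof (cases "s \<in> bspan B")
    case True
    have "bspan B = bspan (B0 \<union> insert s S)"
    proof
      have "B \<subseteq> B0 \<union> insert s S" using B(2) by auto
      then show "bspan B \<subseteq> bspan (B0 \<union> insert s S)" by (rule bspan_mono)
      show "bspan (B0 \<union> insert s S) \<subseteq> bspan B"
      proof
        fix x assume "x \<in> bspan (B0 \<union> insert s S)"
        then obtain T where T: "T \<subseteq> B0 \<union> insert s S" "x = psum T" by (auto simp: bspan_def)
        have finT: "finite T" using finite_subset[OF T(1)] B0(1) insert(1) by simp
        have r: "psum (T - {s}) \<in> bspan B" using B(4) T(1) by (auto simp: bspan_def)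
        show "x \<in> bspan B"
        proof (cases "s \<in> T")
          case True
          then have "x = vadd s (psum (T - {s}))" using T(2) psum_remove finT by blast
          then show ?thesis using bspan_closed[OF finB BW] \<open>s \<in> bspan B\<close> r by simp
        next
          case False
          then show ?thesis using r T(2) by simp
        qed
      qed
    qed
    then show ?thesis using B by blast
  next
    case False
    have sB: "s \<notin> B" using False in_bspan BV by blast
    define B' where "B' = insert s B"
    have finB': "finite B'" "B' \<subseteq> W a b" using finB BW sW by (auto simp: B'_def)
    have "indep B'"
      unfolding indep_iff[OF finB']
    proof (intro allI impI)
      fix T assume T: "T \<subseteq> B'" "psum T = vzero"
      have finT: "finite T" using finite_subset[OF T(1) finB'(1)] .
      show "T = {}"
      proof (cases "s \<in> T")
        case True
        have TW: "T - {s} \<subseteq> W a b" using T(1) finB' by auto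
        have "vadd s (psum (T - {s})) = vzero" using T(2) psum_remove[OF finT True] by simp
        then have "s = psum (T - {s})" using W_vadd_eq0[OF sW psum_W[OF _ TW]] finT by simp
        moreover have "T - {s} \<subseteq> B" using T(1) by (auto simp: B'_def)
        ultimately have "s \<in> bspan B" by (auto simp: bspan_def)
        then show ?thesis using False by simp
      next
        case False
        then have "T \<subseteq> B" using T(1) by (auto simp: B'_def)
        then show ?thesis using B(3) indep_iff[OF finB BW] T(2) by blast
      qed
    qed
    moreover have "bspan B' = bspan (B0 \<union> insert s S)"
    proof
      have "B' \<subseteq> B0 \<union> insert s S" using B(2) by (auto simp: B'_def)
      then show "bspan B' \<subseteq> bspan (B0 \<union> insert s S)" by (rule bspan_mono)
      show "bspan (B0 \<union> insert s S) \<subseteq> bspan B'"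
      proof
        fix x assume "x \<in> bspan (B0 \<union> insert s S)"
        then obtain T where T: "T \<subseteq> B0 \<union> insert s S" "x = psum T" by (auto simp: bspan_def)
        have finT: "finite T" using finite_subset[OF T(1)] B0(1) insert(1) by simp
        have "psum (T - {s}) \<in> bspan B" using B(4) T(1) by (auto simp: bspan_def)
        then obtain U where U: "U \<subseteq> B" "psum (T - {s}) = psum U" by (auto simp: bspan_def)
        have finU: "finite U" using finite_subset[OF U(1) finB] .
        show "x \<in> bspan B'"
        proof (cases "s \<in> T")
          case True
          have "x = vadd s (psum U)" using T(2) psum_remove[OF finT True] U by simp
          also have "\<dots> = psum (insert s U)"
          proof -
            have "s \<notin> U" using U(1) sB by auto
            then show ?thesis using psum_insert[OF finU] by simp
          qed
          finally show ?thesis using U(1) by (auto simp: bspan_def B'_def)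
        next
          case False
          then have "x = psum U" using T(2) U by simp
          then show ?thesis using U(1) by (auto simp: bspan_def B'_def)
        qed
      qed
    qed
    moreover have "B0 \<subseteq> B'" "B' \<subseteq> B0 \<union> insert s S" using B(1,2) by (auto simp: B'_def)
    ultimately show ?thesis by blast
  qed
qed

lemma bspan_sub_closed:
  assumes P0: "vzero \<in> P" and Pc: "\<And>x y. x \<in> P \<Longrightarrow> y \<in> P \<Longrightarrow> vadd x y \<in> P"
  shows "finite T \<Longrightarrow> T \<subseteq> P \<Longrightarrow> psum T \<in> P"
proof (induction T rule: finite_induct)
  case empty then show ?case using P0 by simp
next
  case (insert x F) then show ?case using psum_insert Pc by auto
qed

lemma basis_exists:
  assumes PW: "P \<subseteq> W a b" and finP: "finite P" and P0: "vzero \<in> P"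
    and Pc: "\<And>x y. x \<in> P \<Longrightarrow> y \<in> P \<Longrightarrow> vadd x y \<in> P"
    and B0: "B0 \<subseteq> P" "indep B0"
  shows "\<exists>B. B0 \<subseteq> B \<and> B \<subseteq> P \<and> indep B \<and> bspan B = P \<and> finite B"
proof -
  have fB0: "finite B0" using B0(1) finP finite_subset by auto
  obtain B where B: "B0 \<subseteq> B" "B \<subseteq> B0 \<union> P" "indep B" "bspan B = bspan (B0 \<union> P)"
    using ext_basis[OF fB0 _ B0(2) finP PW] B0(1) PW by blast
  have "B0 \<union> P = P" using B0(1) by blast
  moreover have "bspan P = P"
  proof
    show "bspan P \<subseteq> P" unfolding bspan_def
      using bspan_sub_closed[OF P0 Pc] finP finite_subset by blast
    show "P \<subseteq> bspan P" using in_bspan PW W_sub by blast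
  qed
  ultimately have sp: "bspan B = P" using B(4) by simp
  have BP: "B \<subseteq> P" using B(2) B0(1) by auto
  have "finite B" using finite_subset[OF BP finP] .
  then show ?thesis using B(1,3) BP sp by blast
qed

definition lcI :: "(nat \<Rightarrow> z2z4vec) \<Rightarrow> (nat \<Rightarrow> int) \<Rightarrow> nat \<Rightarrow> z2z4vec" where
  "lcI w c n = ((\<lambda>i. (\<Sum>k<n. c k * fst (w k) i) mod 2), (\<lambda>i. (\<Sum>k<n. c k * snd (w k) i) mod 4))"

definition smul :: "int \<Rightarrow> z2z4vec \<Rightarrow> z2z4vec" where
  "smul k x = ((\<lambda>i. (k * fst x i) mod 2), (\<lambda>i. (k * snd x i) mod 4))"

lemma ac_W: "additive_code a b (W a b)"
  unfolding additive_code_def using W_sub W_closed by (auto simp: W_def)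

lemma smul_mem: assumes H: "additive_code a b H" and x: "x \<in> H" shows "smul (int k) x \<in> H"
proof (induction k)
  case 0 then show ?case using ac_zero[OF H] by (simp add: smul_def vzero_def)
next
  case (Suc k)
  have xV: "x \<in> V a b" using x ac_sub[OF H] by blast
  have "smul (int (Suc k)) x = vadd (smul (int k) x) x"
    by (rule vec_eqI) (simp_all add: smul_def algebra_simps mod_simps V_fst[OF xV] V_snd[OF xV])
  then show ?case using Suc ac_add[OF H _ x] by simp
qed

lemma lcI_0[simp]: "lcI w c 0 = vzero" by (simp add: lcI_def vzero_def)
lemma lcI_Suc: "lcI w c (Suc n) = vadd (lcI w c n) (smul (c n) (w n))"
  by (rule vec_eqI) (simp_all add: lcI_def smul_def mod_simps)

lemma lcI_mem: assumes H: "additive_code a b H"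
  shows "(\<forall>k<n. w k \<in> H) \<Longrightarrow> (\<forall>k<n. 0 \<le> c k) \<Longrightarrow> lcI w c n \<in> H"
proof (induction n)
  case 0 then show ?case using ac_zero[OF H] by simp
next
  case (Suc n)
  have "c n = int (nat (c n))" using Suc.prems by simp
  then have "smul (c n) (w n) \<in> H" using smul_mem[OF H, of "w n" "nat (c n)"] Suc.prems by simp
  then show ?case using Suc ac_add[OF H] by (simp add: lcI_Suc)
qed

lemma mod4_mod2: "((z::int) mod 4) mod 2 = z mod 2"
  by (simp add: mod_mod_cancel)

lemma lcI_add4: "lcI w (\<lambda>k. (c k + c' k) mod 4) n = vadd (lcI w c n) (lcI w c' n)"
proof (rule vec_eqI)
  fix i
  have "(\<Sum>k<n. (c k + c' k) mod 4 * fst (w k) i) mod 2 = (\<Sum>k<n. (c k + c' k) * fst (w k) i) mod 2"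
  proof (rule sum_mod_cong)
    fix k
    have "((c k + c' k) mod 4 * fst (w k) i) mod 2 = (((c k + c' k) mod 4) mod 2 * fst (w k) i) mod 2"
      by (simp add: mod_mult_left_eq)
    also have "\<dots> = ((c k + c' k) * fst (w k) i) mod 2" by (simp add: mod4_mod2 mod_mult_left_eq)
    finally show "((c k + c' k) mod 4 * fst (w k) i) mod 2 = ((c k + c' k) * fst (w k) i) mod 2" .
  qed
  then show "fst (lcI w (\<lambda>k. (c k + c' k) mod 4) n) i = fst (vadd (lcI w c n) (lcI w c' n)) i"
    by (simp add: lcI_def mod_simps sum.distrib algebra_simps)
next
  fix j
  have "(\<Sum>k<n. (c k + c' k) mod 4 * snd (w k) j) mod 4 = (\<Sum>k<n. (c k + c' k) * snd (w k) j) mod 4"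
    by (rule sum_mod_cong) (simp add: mod_mult_left_eq)
  then show "snd (lcI w (\<lambda>k. (c k + c' k) mod 4) n) j = snd (vadd (lcI w c n) (lcI w c' n)) j"
    by (simp add: lcI_def mod_simps sum.distrib algebra_simps)
qed

lemma even_mult_mod: assumes "even (f::int)" shows "((x mod 2) * f) mod 4 = (x * f) mod 4"
proof -
  obtain g where "f = 2 * g" using assms by (auto elim!: evenE)
  then show ?thesis using two_mod[of x g] by (simp add: algebra_simps)
qed

lemma lcI_add2: assumes "\<forall>k<n. w k \<in> W a b"
  shows "lcI w (\<lambda>k. (c k + c' k) mod 2) n = vadd (lcI w c n) (lcI w c' n)"
proof (rule vec_eqI)
  fix i
  have "(\<Sum>k<n. (c k + c' k) mod 2 * fst (w k) i) mod 2 = (\<Sum>k<n. (c k + c' k) * fst (w k) i) mod 2"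
    by (rule sum_mod_cong) (simp add: mod_mult_left_eq)
  then show "fst (lcI w (\<lambda>k. (c k + c' k) mod 2) n) i = fst (vadd (lcI w c n) (lcI w c' n)) i"
    by (simp add: lcI_def mod_simps sum.distrib algebra_simps)
next
  fix j
  have "(\<Sum>k<n. (c k + c' k) mod 2 * snd (w k) j) mod 4 = (\<Sum>k<n. (c k + c' k) * snd (w k) j) mod 4"
  proof (rule sum_mod_cong)
    fix k assume "k \<in> {..<n}"
    then have "even (snd (w k) j)" using assms by (auto simp: W_iff)
    then show "((c k + c' k) mod 2 * snd (w k) j) mod 4 = ((c k + c' k) * snd (w k) j) mod 4"
      by (rule even_mult_mod)
  qed
  then show "snd (lcI w (\<lambda>k. (c k + c' k) mod 2) n) j = snd (vadd (lcI w c n) (lcI w c' n)) j"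
    by (simp add: lcI_def mod_simps sum.distrib algebra_simps)
qed

lemma lcI_double: "vadd (lcI w c n) (lcI w c n) = lcI (\<lambda>k. vadd (w k) (w k)) c n"
proof (rule vec_eqI)
  fix i
  have "(\<Sum>k<n. c k * ((fst (w k) i + fst (w k) i) mod 2)) = 0" by simp
  then show "fst (vadd (lcI w c n) (lcI w c n)) i = fst (lcI (\<lambda>k. vadd (w k) (w k)) c n) i"
    by (simp add: lcI_def mod_simps del: sum.neutral_const)
next
  fix j
  have "(\<Sum>k<n. c k * ((snd (w k) j + snd (w k) j) mod 4)) mod 4 = (\<Sum>k<n. c k * (snd (w k) j + snd (w k) j)) mod 4"
    by (rule sum_mod_cong) (simp add: mod_mult_right_eq)
  moreover have "(\<Sum>k<n. c k * (snd (w k) j + snd (w k) j)) = 2 * (\<Sum>k<n. c k * snd (w k) j)"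
    by (simp add: sum_distrib_left algebra_simps)
  ultimately show "snd (vadd (lcI w c n) (lcI w c n)) j = snd (lcI (\<lambda>k. vadd (w k) (w k)) c n) j"
    by (simp add: lcI_def mod_simps)
qed

lemma lcI_half: assumes "\<forall>k<n. c k = 2 * c' k"
  shows "lcI w c n = lcI (\<lambda>k. vadd (w k) (w k)) c' n"
proof (rule vec_eqI)
  fix i
  have "(\<Sum>k<n. c k * fst (w k) i) = 2 * (\<Sum>k<n. c' k * fst (w k) i)"
    using assms by (simp add: sum_distrib_left algebra_simps)
  then show "fst (lcI w c n) i = fst (lcI (\<lambda>k. vadd (w k) (w k)) c' n) i"
    by (simp add: lcI_def)
next
  fix j
  have "(\<Sum>k<n. c k * snd (w k) j) = (\<Sum>k<n. c' k * (snd (w k) j + snd (w k) j))"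
    using assms by (intro sum.cong) (simp_all add: algebra_simps)
  moreover have "(\<Sum>k<n. c' k * ((snd (w k) j + snd (w k) j) mod 4)) mod 4 = (\<Sum>k<n. c' k * (snd (w k) j + snd (w k) j)) mod 4"
    by (rule sum_mod_cong) (simp add: mod_mult_right_eq)
  ultimately show "snd (lcI w c n) j = snd (lcI (\<lambda>k. vadd (w k) (w k)) c' n) j"
    by (simp add: lcI_def)
qed

lemma lcI_mod2: assumes "\<forall>k<n. w k \<in> W a b"
  shows "lcI w c n = lcI w (\<lambda>k. c k mod 2) n"
proof (rule vec_eqI)
  fix i
  have "(\<Sum>k<n. c k * fst (w k) i) mod 2 = (\<Sum>k<n. c k mod 2 * fst (w k) i) mod 2"
    by (rule sum_mod_cong) (simp add: mod_mult_left_eq)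
  then show "fst (lcI w c n) i = fst (lcI w (\<lambda>k. c k mod 2) n) i" by (simp add: lcI_def)
next
  fix j
  have "(\<Sum>k<n. c k * snd (w k) j) mod 4 = (\<Sum>k<n. c k mod 2 * snd (w k) j) mod 4"
  proof (rule sum_mod_cong)
    fix k assume "k \<in> {..<n}"
    then have "even (snd (w k) j)" using assms by (auto simp: W_iff)
    then show "(c k * snd (w k) j) mod 4 = (c k mod 2 * snd (w k) j) mod 4"
      using even_mult_mod by metis
  qed
  then show "snd (lcI w c n) j = snd (lcI w (\<lambda>k. c k mod 2) n) j" by (simp add: lcI_def)
qed

lemma lcI_psum: assumes inj: "inj_on w {..<n}" and c01: "\<forall>k<n. c k = 0 \<or> c k = 1"
  shows "lcI w c n = psum (w ` {k. k < n \<and> c k = 1})"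
proof -
  define S where "S = {k. k < n \<and> c k = 1}"
  have injS: "inj_on w S" using inj by (rule inj_on_subset) (auto simp: S_def)
  have key: "(\<Sum>k<n. c k * F k) = sum F S" for F :: "nat \<Rightarrow> int"
  proof -
    have eq: "{k\<in>{..<n}. c k = 1} = S" by (auto simp: S_def)
    have "sum F S = (\<Sum>k<n. if c k = 1 then F k else 0)"
      using sum.inter_filter[of "{..<n}" F "\<lambda>k. c k = 1"] eq by simp
    also have "\<dots> = (\<Sum>k<n. c k * F k)" using c01 by (intro sum.cong) auto
    finally show ?thesis by simp
  qed
  have "lcI w c n = psum (w ` S)"
  proof (rule vec_eqI)
    fix i
    show "fst (lcI w c n) i = fst (psum (w ` S)) i"
      by (simp add: lcI_def psum_def key sum.reindex[OF injS])
  next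
    fix j
    show "snd (lcI w c n) j = snd (psum (w ` S)) j"
      by (simp add: lcI_def psum_def key sum.reindex[OF injS])
  qed
  then show ?thesis by (simp add: S_def)
qed

lemma iso_from_L:
  assumes HV: "H \<subseteq> V a b" and finH: "finite H"
    and Lmap: "\<And>z. z \<in> V g d \<Longrightarrow> L z \<in> H"
    and Ladd: "\<And>z z'. z \<in> V g d \<Longrightarrow> z' \<in> V g d \<Longrightarrow> L (vadd z z') = vadd (L z) (L z')"
    and Lker: "\<And>z. z \<in> V g d \<Longrightarrow> L z = vzero \<Longrightarrow> z = vzero"
    and cH: "card H = card (V g d)"
  shows "iso_Z2Z4 H g d"
proof -
  have inj: "inj_on L (V g d)"
  proof (rule inj_onI)
    fix z z' assume z: "z \<in> V g d" and z': "z' \<in> V g d" and e: "L z = L z'"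
    define u where "u = vsub z z'"
    have uV: "u \<in> V g d" unfolding u_def using V_vsub[OF z z'] .
    have zu: "z = vadd u z'" unfolding u_def using vadd_vsub_cancel[OF z] by simp
    have "vadd (L u) (L z') = vadd vzero (L z')" using e zu Ladd[OF uV z'] HV Lmap[OF z'] by auto
    moreover have "L u \<in> V a b" using Lmap[OF uV] HV by blast
    ultimately have "L u = vzero" using vadd_cancel[of "L u" a b vzero "L z'"] by simp
    then have "u = vzero" using Lker[OF uV] by simp
    then show "z = z'" using zu z' by simp
  qed
  have img: "L ` V g d = H"
  proof (rule card_subset_eq[OF finH])
    show "L ` V g d \<subseteq> H" using Lmap by blast
    show "card (L ` V g d) = card H" using card_image[OF inj] cH by simp
  qed
  have bij: "bij_betw L (V g d) H" using inj img by (simp add: bij_betw_def)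
  define f where "f = the_inv_into (V g d) L"
  have fbij: "bij_betw f H (V g d)" unfolding f_def by (rule bij_betw_the_inv_into[OF bij])
  have fadd: "f (vadd x y) = vadd (f x) (f y)" if x: "x \<in> H" and y: "y \<in> H" for x y
  proof -
    have fx: "f x \<in> V g d" "L (f x) = x" using x bij fbij unfolding f_def
      by (auto simp: bij_betw_def f_the_inv_into_f the_inv_into_into)
    have fy: "f y \<in> V g d" "L (f y) = y" using y bij fbij unfolding f_def
      by (auto simp: bij_betw_def f_the_inv_into_f the_inv_into_into)
    have "L (vadd (f x) (f y)) = vadd x y" using Ladd[OF fx(1) fy(1)] fx fy by simp
    then have "f (vadd x y) = f (L (vadd (f x) (f y)))" by simp
    also have "\<dots> = vadd (f x) (f y)"
      using the_inv_into_f_f[OF inj V_closed[OF fx(1) fy(1)]] by (simp add: f_def)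
    finally show ?thesis .
  qed
  show ?thesis unfolding iso_Z2Z4_def using fbij fadd by blast
qed

lemma lcI_cong: "(\<And>k. k < n \<Longrightarrow> w k = w' k) \<Longrightarrow> (\<And>k. k < n \<Longrightarrow> c k = c' k) \<Longrightarrow> lcI w c n = lcI w' c' n"
  unfolding lcI_def by (intro prod_eqI) (auto intro!: sum.cong)

lemma dbl_W: "x \<in> V a b \<Longrightarrow> vadd x x \<in> W a b"
  by (auto simp: W_iff V_closed even_mod4)

lemma indep_empty: "indep {}" by (simp add: indep_def)

lemma struct_thm:
  fixes m p :: nat
  assumes H: "additive_code a b H" and cH: "card H = 2^m" and cH2: "card (H \<inter> W a b) = 2^p"
  shows "iso_Z2Z4 H (2*p - m) (m - p)"
proof -
  have HV: "H \<subseteq> V a b" using ac_sub[OF H] .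
  have finH: "finite H" using ac_finite[OF H] .
  define H2 where "H2 = H \<inter> W a b"
  define D2 where "D2 = (\<lambda>x. vadd x x) ` H"
  have H2W: "H2 \<subseteq> W a b" by (simp add: H2_def)
  have finH2: "finite H2" using finH by (simp add: H2_def)
  have D2H2: "D2 \<subseteq> H2" unfolding D2_def H2_def using HV dbl_W ac_add[OF H] by blast
  have finD2: "finite D2" using finite_subset[OF D2H2 finH2] .
  have cnt: "card H = card D2 * card H2"
    unfolding D2_def
  proof (rule fiber_count[OF HV])
    show "H2 \<subseteq> V a b" using H2W W_sub by blast
    show "finite H" using finH .
    show "vadd k x \<in> H" if "x \<in> H" "k \<in> H2" for x k using that ac_add[OF H] by (auto simp: H2_def)
    show "vadd x x = vadd y y \<longleftrightarrow> vsub x y \<in> H2" if x: "x \<in> H" and y: "y \<in> H" for x y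
    proof -
      have xV: "x \<in> V a b" and yV: "y \<in> V a b" using x y HV by auto
      have id: "vadd (vsub x y) (vsub x y) = vsub (vadd x x) (vadd y y)"
        by (rule vec_eqI; simp add: mod_simps; simp add: algebra_simps)
      have "vsub x y \<in> H2 \<longleftrightarrow> vadd (vsub x y) (vsub x y) = vzero"
        using ac_sub2[OF H x y] V_vsub[OF xV yV] by (auto simp: H2_def W_def)
      also have "\<dots> \<longleftrightarrow> vadd x x = vadd y y" using id vsub_eq0[OF V_closed[OF xV xV] V_closed[OF yV yV]] by simp
      finally show ?thesis by simp
    qed
  qed
  have "vzero \<in> H2" using ac_zero[OF H] by (auto simp: H2_def W_def)
  then have "card H2 \<noteq> 0" using finH2 by auto
  have "card D2 \<noteq> 0" using finD2 ac_zero[OF H] by (auto simp: D2_def)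
  have "2^m = 2^p * card D2" using cnt cH cH2 by (simp add: H2_def)
  then have pm: "p \<le> m" and cD2: "card D2 = 2^(m - p)" using pow2_eq \<open>card D2 \<noteq> 0\<close> by blast+
  have "vzero = vadd vzero vzero" by (rule vadd_zero(1)[OF vzero_V, symmetric])
  then have D20: "vzero \<in> D2" unfolding D2_def by (rule image_eqI) (rule ac_zero[OF H])
  have D2c: "vadd x y \<in> D2" if xD: "x \<in> D2" and yD: "y \<in> D2" for x y
  proof -
    obtain u where u: "u \<in> H" "x = vadd u u" using xD unfolding D2_def by blast
    obtain v where v: "v \<in> H" "y = vadd v v" using yD unfolding D2_def by blast
    note uv = u(1) v(1) u(2) v(2)
    have "vadd x y = vadd (vadd u v) (vadd u v)" unfolding uv
      by (rule vec_eqI; simp add: mod_simps; simp add: algebra_simps)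
    then show ?thesis using ac_add[OF H uv(1,2)] unfolding D2_def by blast
  qed
  obtain BD where BD: "{} \<subseteq> BD" "BD \<subseteq> D2" "indep BD" "bspan BD = D2" "finite BD"
    using basis_exists[OF order.trans[OF D2H2 H2W] finD2 D20 D2c _ indep_empty] by blast
  have cBD: "card BD = m - p"
  proof -
    have "(2::nat) ^ card BD = 2 ^ (m - p)" using card_bspan[OF BD(5) BD(3)] BD(4) cD2 by simp
    then show ?thesis by simp
  qed
  have H20: "vzero \<in> H2" by fact
  have H2c: "vadd x y \<in> H2" if "x \<in> H2" "y \<in> H2" for x y
    using that ac_add[OF H] W_closed by (auto simp: H2_def)
  obtain BQ where BQ: "BD \<subseteq> BQ" "BQ \<subseteq> H2" "indep BQ" "bspan BQ = H2" "finite BQ"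
    using basis_exists[OF H2W finH2 H20 H2c _ BD(3)] BD(2) D2H2 by blast
  have cBQ: "card BQ = p"
  proof -
    have "(2::nat) ^ card BQ = 2 ^ p" using card_bspan[OF BQ(5) BQ(3)] BQ(4) cH2 by (simp add: H2_def)
    then show ?thesis by simp
  qed
  define Y where "Y = BQ - BD"
  define g where "g = card Y"
  define d where "d = card BD"
  have cY: "g = card BQ - card BD" unfolding g_def Y_def using card_Diff_subset[OF BD(5) BQ(1)] .
  have mp: "m - p \<le> p" using card_mono[OF BQ(5) BQ(1)] cBD cBQ by simp
  have gval: "g = 2*p - m" using cY cBD cBQ mp pm by simp
  have dval: "d = m - p" using cBD by (simp add: d_def)
  have finY: "finite Y" using BQ(5) by (simp add: Y_def)
  obtain hy where hy: "bij_betw hy {0..<g} Y" using ex_bij_betw_nat_finite[OF finY] by (auto simp: g_def)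
  obtain hx where hx: "bij_betw hx {0..<d} BD" using ex_bij_betw_nat_finite[OF BD(5)] by (auto simp: d_def)
  have hyY: "hy k \<in> Y" if "k < g" for k using hy that by (auto simp: bij_betw_def)
  have hxB: "hx k \<in> BD" if "k < d" for k using hx that by (auto simp: bij_betw_def)
  have hyW: "hy k \<in> W a b" and hyH: "hy k \<in> H" if "k < g" for k
    using hyY[OF that] BQ(2) unfolding Y_def H2_def by auto
  have hxW: "hx k \<in> W a b" if "k < d" for k using hxB[OF that] BQ(1,2) by (auto simp: H2_def)
  define xq where "xq k = (SOME x. x \<in> H \<and> vadd x x = hx k)" for k
  have xq: "xq k \<in> H \<and> vadd (xq k) (xq k) = hx k" if "k < d" for k
  proof -
    have "hx k \<in> D2" using hxB[OF that] BD(2) by blast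
    then obtain x0 where x0: "x0 \<in> H" "hx k = vadd x0 x0" unfolding D2_def by (rule imageE)
    then have "\<exists>x. x \<in> H \<and> vadd x x = hx k" by (intro exI[of _ x0]) simp
    then show ?thesis unfolding xq_def by (rule someI_ex)
  qed
  define L where "L z = vadd (lcI hy (fst z) g) (lcI xq (snd z) d)" for z
  have nonneg: "0 \<le> fst z k" "0 \<le> snd z k" if "z \<in> V g d" for z k
    using V_fst01[OF that, of k] V_snd03[OF that, of k] by auto
  have Lmap: "L z \<in> H" if z: "z \<in> V g d" for z
  proof -
    have "lcI hy (fst z) g \<in> H" using lcI_mem[OF H] hyH nonneg[OF z] by blast
    moreover have "lcI xq (snd z) d \<in> H" using lcI_mem[OF H] xq nonneg[OF z] by blast
    ultimately show ?thesis unfolding L_def using ac_add[OF H] by blast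
  qed
  have Ladd: "L (vadd z z') = vadd (L z) (L z')" if "z \<in> V g d" "z' \<in> V g d" for z z'
  proof -
    have f: "fst (vadd z z') = (\<lambda>k. (fst z k + fst z' k) mod 2)" by (simp add: vadd_def)
    have s: "snd (vadd z z') = (\<lambda>k. (snd z k + snd z' k) mod 4)" by (simp add: vadd_def)
    have "L (vadd z z') = vadd (vadd (lcI hy (fst z) g) (lcI hy (fst z') g)) (vadd (lcI xq (snd z) d) (lcI xq (snd z') d))"
      unfolding L_def f s using lcI_add2[of g hy a b] hyW lcI_add4 by simp
    also have "\<dots> = vadd (L z) (L z')" unfolding L_def
      by (rule vec_eqI; simp add: mod_simps; simp add: algebra_simps)
    finally show ?thesis .
  qed
  have injhx: "inj_on hx {..<d}" using hx by (auto simp: bij_betw_def atLeast0LessThan)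
  have injhy: "inj_on hy {..<g}" using hy by (auto simp: bij_betw_def atLeast0LessThan)
  have Lker: "z = vzero" if z: "z \<in> V g d" and Lz: "L z = vzero" for z
  proof -
    define e where "e = fst z"
    define c where "c = snd z"
    define A where "A = lcI hy e g"
    define Bq where "Bq = lcI xq c d"
    have AW: "A \<in> W a b" unfolding A_def using lcI_mem[OF ac_W] hyW nonneg[OF z] by (auto simp: e_def)
    have BqV: "Bq \<in> V a b" unfolding Bq_def using lcI_mem[OF H] xq nonneg[OF z] HV by (auto simp: c_def)
    have AB: "vadd A Bq = vzero" using Lz by (simp add: L_def A_def Bq_def e_def c_def)
    have "vadd (vadd A Bq) (vadd A Bq) = vadd (vadd A A) (vadd Bq Bq)"
      by (rule vec_eqI; simp add: mod_simps; simp add: algebra_simps)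
    then have "vadd Bq Bq = vzero" using AB AW V_closed[OF BqV BqV] by (simp add: W_def)
    moreover have "vadd Bq Bq = lcI hx c d"
      unfolding Bq_def lcI_double using xq by (intro lcI_cong) auto
    moreover have "lcI hx c d = lcI hx (\<lambda>k. c k mod 2) d" using lcI_mod2[of d hx a b] hxW by blast
    moreover have "lcI hx (\<lambda>k. c k mod 2) d = psum (hx ` {k. k < d \<and> c k mod 2 = 1})"
      by (rule lcI_psum[OF injhx]) auto
    ultimately have "psum (hx ` {k. k < d \<and> c k mod 2 = 1}) = vzero" by simp
    moreover have "hx ` {k. k < d \<and> c k mod 2 = 1} \<subseteq> BD" using hxB by auto
    moreover have "BD \<subseteq> W a b" using BD(2) D2H2 H2W by blast
    ultimately have "hx ` {k. k < d \<and> c k mod 2 = 1} = {}" using BD(3) indep_iff[OF BD(5)] by blast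
    then have cev: "even (c k)" if "k < d" for k using that by auto
    have c02: "c k = 0 \<or> c k = 2" if "k < d" for k using cev[OF that] V_snd03[OF z, of k] by (auto simp: c_def)
    have "Bq = lcI (\<lambda>k. vadd (xq k) (xq k)) (\<lambda>k. c k div 2) d"
      unfolding Bq_def using cev by (intro lcI_half) auto
    also have "\<dots> = lcI hx (\<lambda>k. c k div 2) d" using xq by (intro lcI_cong) auto
    also have "\<dots> = psum (hx ` {k. k < d \<and> c k div 2 = 1})"
    proof (intro lcI_psum[OF injhx] allI impI)
      fix k assume "k < d"
      then show "c k div 2 = 0 \<or> c k div 2 = 1" using c02[of k] by auto
    qed
    finally have Bq': "Bq = psum (hx ` {k. k < d \<and> c k div 2 = 1})" .
    have A': "A = psum (hy ` {k. k < g \<and> e k = 1})"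
      unfolding A_def using V_fst01[OF z] by (intro lcI_psum[OF injhy]) (auto simp: e_def)
    define S1 where "S1 = hy ` {k. k < g \<and> e k = 1}"
    define S2 where "S2 = hx ` {k. k < d \<and> c k div 2 = 1}"
    have S1Y: "S1 \<subseteq> Y" using hyY by (auto simp: S1_def)
    have S2B: "S2 \<subseteq> BD" using hxB by (auto simp: S2_def)
    have disj: "S1 \<inter> S2 = {}" using S1Y S2B by (auto simp: Y_def)
    have BQW: "BQ \<subseteq> W a b" using BQ(2) H2W by blast
    have fin12: "finite S1" "finite S2" by (auto simp: S1_def S2_def)
    have "vadd (psum S1) (psum S2) = psum ((S1 - S2) \<union> (S2 - S1))"
    proof -
      have "S1 \<subseteq> W a b" "S2 \<subseteq> W a b" using S1Y S2B BQW BQ(1) by (auto simp: Y_def)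
      then show ?thesis by (intro psum_symdiff[OF fin12(1) _ fin12(2)])
    qed
    then have "vadd A Bq = psum ((S1 - S2) \<union> (S2 - S1))" using A' Bq' by (simp add: S1_def S2_def)
    also have "(S1 - S2) \<union> (S2 - S1) = S1 \<union> S2" using disj by blast
    finally have "psum (S1 \<union> S2) = vzero" using AB by simp
    moreover have "S1 \<union> S2 \<subseteq> BQ" using S1Y S2B BQ(1) by (auto simp: Y_def)
    ultimately have "S1 \<union> S2 = {}" using BQ(3) indep_iff[OF BQ(5) BQW] by blast
    then have e0: "\<And>k. k < g \<Longrightarrow> e k \<noteq> 1" and c0: "\<And>k. k < d \<Longrightarrow> c k div 2 \<noteq> 1"
      by (auto simp: S1_def S2_def)
    show "z = vzero"
    proof (rule vec_eqI)
      fix k show "fst z k = fst vzero k"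
        using e0[of k] V_fst01[OF z, of k] V_fst_out[OF z, of k] by (cases "k < g") (auto simp: e_def)
    next
      fix k show "snd z k = snd vzero k"
        using c0[of k] c02[of k] V_snd_out[OF z, of k] by (cases "k < d") (auto simp: c_def)
    qed
  qed
  have cV: "card H = card (V g d)"
  proof -
    have "g + 2*d = m" using gval dval mp pm by simp
    then show ?thesis using cH card_V by simp
  qed
  have "iso_Z2Z4 H g d" by (rule iso_from_L[OF HV finH Lmap Ladd Lker cV])
  then show ?thesis using gval dval by simp
qed

lemma order2_eq: "additive_code a b H \<Longrightarrow> order2_part H = H \<inter> W a b"
  using ac_sub by (auto simp: order2_part_def W_def)

lemma proj_count: assumes H: "additive_code a b H"
  shows "card (H \<inter> W a b) = card (fst ` (H \<inter> W a b)) * card (H \<inter> W0 a b)"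
proof (rule fiber_count)
  have HV: "H \<subseteq> V a b" using ac_sub[OF H] .
  show "H \<inter> W a b \<subseteq> V a b" "H \<inter> W0 a b \<subseteq> V a b" using HV by auto
  show "finite (H \<inter> W a b)" using ac_finite[OF H] by simp
  show "vadd k x \<in> H \<inter> W a b" if "x \<in> H \<inter> W a b" "k \<in> H \<inter> W0 a b" for x k
    using that ac_add[OF H] W_closed W0_sub by blast
  show "fst x = fst y \<longleftrightarrow> vsub x y \<in> H \<inter> W0 a b" if x: "x \<in> H \<inter> W a b" and y: "y \<in> H \<inter> W a b" for x y
  proof -
    have xV: "x \<in> V a b" and yV: "y \<in> V a b" using x y HV by auto
    have sW: "vsub x y \<in> W a b" using W_vsub x y by blast
    have "fst (vsub x y) = (\<lambda>_. 0) \<longleftrightarrow> fst x = fst y"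
    proof -
      have "(fst x i - fst y i) mod 2 = 0 \<longleftrightarrow> fst x i = fst y i" for i
        using V_fst01[OF xV, of i] V_fst01[OF yV, of i] by auto
      then show ?thesis by (auto simp: fun_eq_iff)
    qed
    then show ?thesis using sW ac_sub2[OF H] x y by (auto simp: W0_def W_def)
  qed
qed

lemma bin_dim_lemma:
  fixes p q :: nat
  assumes H: "additive_code a b H" and cW: "card (H \<inter> W a b) = 2^p" and cW0: "card (H \<inter> W0 a b) = 2^q"
  shows "q \<le> p \<and> bin_dim (fst ` order2_part H) (p - q)"
proof -
  have HV: "H \<subseteq> V a b" using ac_sub[OF H] .
  define P where "P = fst ` (H \<inter> W a b)"
  have "2^p = 2^q * card P" using proj_count[OF H] cW cW0 by (simp add: P_def)
  moreover have "card P \<noteq> 0"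
  proof -
    have "vzero \<in> H \<inter> W a b" using ac_zero[OF H] by (simp add: W_def)
    then have "P \<noteq> {}" by (auto simp: P_def)
    moreover have "finite P" using ac_finite[OF H] by (simp add: P_def)
    ultimately show ?thesis by simp
  qed
  ultimately have qp: "q \<le> p" and cP: "card P = 2^(p - q)" using pow2_eq by blast+
  define e where "e u = (u, (\<lambda>_::nat. 0::int))" for u :: "nat \<Rightarrow> int"
  have inje: "inj e" by (auto simp: e_def inj_def)
  have fe: "fst (e u) = u" for u by (simp add: e_def)
  define E where "E = e ` P"
  have finP: "finite P" using ac_finite[OF H] by (simp add: P_def)
  have finE: "finite E" using finP by (simp add: E_def)
  have eW: "e (fst x) \<in> W a b" if "x \<in> H \<inter> W a b" for x
  proof -
    have xV: "x \<in> V a b" using that HV by auto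
    have "e (fst x) \<in> V a b" unfolding V_iff e_def
      using V_fst01[OF xV] V_fst_out[OF xV] by auto
    then show ?thesis by (auto simp: W_iff e_def)
  qed
  have EW: "E \<subseteq> W a b" using eW by (auto simp: E_def P_def)
  have E0: "vzero \<in> E"
  proof -
    have "vzero \<in> H \<inter> W a b" using ac_zero[OF H] by (simp add: W_def)
    moreover have "e (fst vzero) = vzero" by (simp add: e_def vzero_def)
    ultimately show ?thesis unfolding E_def P_def by (metis image_eqI)
  qed
  have Ec: "vadd x y \<in> E" if xE: "x \<in> E" and yE: "y \<in> E" for x y
  proof -
    obtain u where u: "u \<in> H \<inter> W a b" "x = e (fst u)" using xE unfolding E_def P_def by blast
    obtain v where v: "v \<in> H \<inter> W a b" "y = e (fst v)" using yE unfolding E_def P_def by blast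
    have "vadd u v \<in> H \<inter> W a b" using u v ac_add[OF H] W_closed by blast
    moreover have "vadd x y = e (fst (vadd u v))" unfolding u v by (rule vec_eqI) (simp_all add: e_def)
    ultimately show ?thesis by (auto simp: E_def P_def)
  qed
  obtain B' where B': "{} \<subseteq> B'" "B' \<subseteq> E" "indep B'" "bspan B' = E" "finite B'"
    using basis_exists[OF EW finE E0 Ec _ indep_empty] by blast
  define B where "B = fst ` B'"
  have B'eq: "B' = e ` B"
  proof -
    have ef: "x = e (fst x)" if "x \<in> B'" for x using that B'(2) by (auto simp: E_def e_def)
    show ?thesis
    proof (rule set_eqI)
      fix x show "x \<in> B' \<longleftrightarrow> x \<in> e ` B"
      proof
        assume "x \<in> B'" then show "x \<in> e ` B" unfolding B_def using ef by blast
      next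
        assume "x \<in> e ` B"
        then obtain y where "y \<in> B'" "x = e (fst y)" unfolding B_def by blast
        then show "x \<in> B'" using ef by metis
      qed
    qed
  qed
  have BP: "B \<subseteq> P" using B'(2) by (auto simp: B_def E_def fe)
  have finB: "finite B" using B'(5) by (simp add: B_def)
  have psum_e: "psum (e ` S) = e (bsum S)" for S
  proof (rule vec_eqI)
    fix i show "fst (psum (e ` S)) i = fst (e (bsum S)) i"
      using sum.reindex[OF inj_on_subset[OF inje subset_UNIV], of "\<lambda>x. fst x i" S]
      by (simp add: psum_def bsum_def fe)
  next
    fix j
    have "(\<Sum>x\<in>e ` S. snd x j) = 0" by (rule sum.neutral) (auto simp: e_def)
    then show "snd (psum (e ` S)) j = snd (e (bsum S)) j" by (simp add: psum_def e_def)
  qed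
  have inj: "inj_on bsum (Pow B)"
  proof (rule inj_onI)
    fix S S' assume S: "S \<in> Pow B" and S': "S' \<in> Pow B" and eq: "bsum S = bsum S'"
    then have "psum (e ` S) = psum (e ` S')" using psum_e by simp
    moreover have "e ` S \<in> Pow B'" "e ` S' \<in> Pow B'" using S S' B'eq by auto
    ultimately have "e ` S = e ` S'" by (rule inj_onD[OF B'(3)[unfolded indep_def]])
    then show "S = S'" using inje by (simp add: inj_image_eq_iff)
  qed
  have img: "bsum ` Pow B = P"
  proof
    show "bsum ` Pow B \<subseteq> P"
    proof
      fix u assume "u \<in> bsum ` Pow B"
      then obtain S where S: "S \<subseteq> B" "u = bsum S" by auto
      have "e ` S \<subseteq> B'" using S B'eq by auto
      then have "psum (e ` S) \<in> E" using B'(4) by (auto simp: bspan_def)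
      then have "e u \<in> E" using psum_e S by simp
      then show "u \<in> P" using inje by (auto simp: E_def inj_def)
    qed
    show "P \<subseteq> bsum ` Pow B"
    proof
      fix u assume u: "u \<in> P"
      then have "e u \<in> bspan B'" using B'(4) by (simp add: E_def)
      then obtain T where T: "T \<subseteq> B'" "e u = psum T" by (auto simp: bspan_def)
      define S where "S = fst ` T"
      have efT: "x = e (fst x)" if "x \<in> T" for x using that T(1) B'(2) by (auto simp: E_def e_def)
      have "e ` S = (\<lambda>x. e (fst x)) ` T" by (simp add: S_def image_image)
      also have "\<dots> = (\<lambda>x. x) ` T" using efT by (intro image_cong) auto
      finally have "T = e ` S" by simp
      then have "e u = e (bsum S)" using T psum_e by simp
      then have "u = bsum S" using inje by (simp add: inj_def)
      moreover have "S \<subseteq> B" using T(1) by (auto simp: S_def B_def)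
      ultimately show "u \<in> bsum ` Pow B" by auto
    qed
  qed
  have cB: "card B = p - q"
  proof -
    have "card B' = card B" using B'eq card_image[OF inj_on_subset[OF inje subset_UNIV]] by simp
    moreover have "(2::nat) ^ card B' = 2 ^ (p - q)" using card_bspan[OF B'(5) B'(3)] B'(4) cP finP inje
      by (simp add: E_def card_image inj_on_subset)
    ultimately show ?thesis by simp
  qed
  have "bin_dim P (p - q)" unfolding bin_dim_def using finB BP cB inj img by blast
  then show ?thesis using qp order2_eq[OF H] by (simp add: P_def)
qed

context pcode begin

lemma main_counts:
  assumes aR: "1 + a = 2^R" and abT: "1 + a + 2*b = 2^T"
  shows "has_type a b C (2*(a+b-R) - (a+2*b-T)) ((a+2*b-T) - (a+b-R)) ((a+b-R) - (b-(T-R)))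
      \<and> has_type a b (dual a b C) (2*R - T) (T - R) (R - (T-R))
      \<and> R \<le> T \<and> T \<le> a + 2*b \<and> R \<le> a + b \<and> T - R \<le> b \<and> b - (T-R) \<le> a+b-R \<and> T - R \<le> R"
proof -
  have finC: "finite C" using ac_finite[OF ac] .
  have Cne: "card C \<noteq> 0" using C0 finC by auto
  have "2^(a+2*b) = 2^T * card C" using cnt_V unfolding card_V card_Eset abT .
  then have T1: "T \<le> a + 2*b" and cC: "card C = 2^(a+2*b-T)" using pow2_eq Cne by blast+
  have CWne: "card (C \<inter> W a b) \<noteq> 0" using C0 finC by (auto simp: W_def)
  have "2^(a+b) = 2^R * card (C \<inter> W a b)" using cnt_CapW unfolding card_W aR .
  then have R1: "R \<le> a + b" and cCW: "card (C \<inter> W a b) = 2^(a+b-R)" using pow2_eq CWne by blast+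
  have cCWs: "card CW = 2^(R + (a+2*b-T))" using cnt_CW unfolding aR cC by (simp add: power_add)
  have sne: "card (syn ` W0 a b) \<noteq> 0"
  proof -
    have "vzero \<in> W0 a b" by (auto simp: W0_def vzero_def vadd_def V_def)
    moreover have "finite (W0 a b)" using finite_subset[OF order.trans[OF W0_sub W_sub] finite_V] .
    ultimately show ?thesis by auto
  qed
  have "2^(a+2*b) = 2^(R + (a+2*b-T)) * card (syn ` W0 a b)" using cnt_dbl card_V cCWs by simp
  then have RT0: "R + (a+2*b-T) \<le> a+2*b" and cs0: "card (syn ` W0 a b) = 2^(a+2*b - (R + (a+2*b-T)))"
    using pow2_eq sne by blast+
  have RT: "R \<le> T" using RT0 T1 by simp
  have ex1: "a+2*b - (R + (a+2*b-T)) = T - R" using RT T1 by arith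
  have cs: "card (syn ` W0 a b) = 2^(T-R)" using cs0 ex1 by simp
  have CW0ne: "card (C \<inter> W0 a b) \<noteq> 0" using C0 finC by (auto simp: W0_def vzero_def vadd_def V_def)
  have "2^b = 2^(T-R) * card (C \<inter> W0 a b)" using cnt_CapW0 card_W0 cs by simp
  then have TRb: "T - R \<le> b" and cCW0: "card (C \<inter> W0 a b) = 2^(b - (T-R))" using pow2_eq CW0ne by blast+
  have cCW0s: "card CW0 = 2^((T-R) + (a+2*b-T))" using cnt_CW0 unfolding cs cC by (simp add: power_add)
  have dfin: "finite (dual a b D)" for D using ac_finite[OF dual_ac] .
  have dne: "card (dual a b D) \<noteq> 0" for D using ac_zero[OF dual_ac, of a b D] dfin[of D] by auto
  have "2^(a+2*b) = 2^(a+2*b-T) * card (dual a b C)" using dual_card[OF ac] cC card_V by simp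
  then have "card (dual a b C) = 2^(a+2*b - (a+2*b-T))" using pow2_eq dne by blast
  moreover have "a+2*b - (a+2*b-T) = T" using T1 by arith
  ultimately have cD: "card (dual a b C) = 2^T" by simp
  have "2^(a+2*b) = 2^(R + (a+2*b-T)) * card (dual a b CW)" using dual_card[OF CW_ac] cCWs card_V by simp
  then have "card (dual a b CW) = 2^(a+2*b - (R + (a+2*b-T)))" using pow2_eq dne by blast
  then have cDW0: "card (dual a b C \<inter> W0 a b) = 2^(T-R)" using dual_CW cs0 cs by simp
  have "2^(a+2*b) = 2^((T-R) + (a+2*b-T)) * card (dual a b CW0)" using dual_card[OF CW0_ac] cCW0s card_V by simp
  then have "card (dual a b CW0) = 2^(a+2*b - ((T-R) + (a+2*b-T)))" using pow2_eq dne by blast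
  moreover have "a+2*b - ((T-R) + (a+2*b-T)) = R" using RT T1 by arith
  ultimately have cDW: "card (dual a b C \<inter> W a b) = 2^R" using dual_CW0 by simp
  have iso1: "iso_Z2Z4 C (2*(a+b-R) - (a+2*b-T)) ((a+2*b-T) - (a+b-R))"
    by (rule struct_thm[OF ac cC cCW])
  have bd1: "b - (T-R) \<le> a+b-R \<and> bin_dim (fst ` order2_part C) ((a+b-R) - (b-(T-R)))"
    by (rule bin_dim_lemma[OF ac cCW cCW0])
  have iso2: "iso_Z2Z4 (dual a b C) (2*R - T) (T - R)"
    by (rule struct_thm[OF dual_ac cD cDW])
  have bd2: "T - R \<le> R \<and> bin_dim (fst ` order2_part (dual a b C)) (R - (T-R))"
    by (rule bin_dim_lemma[OF dual_ac cDW cDW0])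
  show ?thesis unfolding has_type_def using ac dual_ac iso1 bd1 iso2 bd2 RT T1 R1 TRb by blast
qed

end

lemma arith3: "(r::nat) \<le> t \<Longrightarrow> r \<le> a+b \<Longrightarrow> t - r \<le> b \<Longrightarrow> b - (t-r) \<le> a+b-r \<Longrightarrow> (a+b-r) - (b-(t-r)) = (a + 1 + t) - (2*r + 1)"
  by arith

theorem proposition2p3:
  fixes r t :: nat and C :: "z2z4vec set"
  assumes "2 \<le> r" and "r \<le> t" and "t \<le> 2 * r"
    and "additive_code (2^r - 1) (2^(t-1) - 2^(r-1)) C"
    and "perfect1 ((2^r - 1) + 2 * (2^(t-1) - 2^(r-1))) (Phi (2^r - 1) ` C)"
  shows "has_type (2^r - 1) (2^(t-1) - 2^(r-1)) C
           ((2^r + t) - (2*r + 1)) ((2^(t-1) + r) - (2^(r-1) + t)) ((2^r + t) - (2*r + 1))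
       \<and> has_type (2^r - 1) (2^(t-1) - 2^(r-1)) (dual (2^r - 1) (2^(t-1) - 2^(r-1)) C)
           (2*r - t) (t - r) (2*r - t)"
proof -
  interpret pcode "2^r - 1" "2^(t-1) - 2^(r-1)" C
    by unfold_locales (use assms in simp_all)
  have Ar: "(2::nat)^r = 2 * 2^(r-1)" using assms(1) by (metis Suc_diff_1 less_le_trans pos2 power_Suc zero_less_numeral)
  have At: "(2::nat)^t = 2 * 2^(t-1)" using assms(1,2) by (metis Suc_diff_1 less_le_trans pos2 power_Suc zero_less_numeral)
  have le: "(2::nat)^(r-1) \<le> 2^(t-1)" using assms(2) by (simp add: power_increasing)
  have rA: "r < (2::nat)^r" by (rule less_exp)
  have aR: "1 + (2^r - 1) = (2::nat)^r" by simp
  have abT: "1 + (2^r - 1) + 2 * (2^(t-1) - 2^(r-1)) = (2::nat)^t"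
  proof -
    have "\<And>A B2 Br T :: nat. A = 2 * Br \<Longrightarrow> T = 2 * B2 \<Longrightarrow> Br \<le> B2 \<Longrightarrow> 1 \<le> Br \<Longrightarrow> 1 + (A - 1) + 2 * (B2 - Br) = T"
      by arith
    moreover have "1 \<le> (2::nat)^(r-1)" by simp
    ultimately show ?thesis using Ar At le by blast
  qed
  note mc = main_counts[OF aR abT]
  define a where "a = (2::nat)^r - 1"
  define b where "b = (2::nat)^(t-1) - 2^(r-1)"
  define Br where "Br = (2::nat)^(r-1)"
  have A: "(2::nat)^r = a + 1" unfolding a_def by simp
  have B: "(2::nat)^(t-1) = b + Br" unfolding b_def Br_def using le by simp
  note mc' = mc[folded a_def b_def]
  have side: "r \<le> t" "t \<le> a + 2*b" "r \<le> a + b" "t - r \<le> b" "b - (t - r) \<le> a + b - r" "t - r \<le> r"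
    using mc' by blast+
  have e1: "2*(a+b-r) - (a+2*b-t) = (a + 1 + t) - (2*r + 1)"
    using side by arith
  have e2: "(a+2*b-t) - (a+b-r) = (b + Br + r) - (Br + t)"
    using side by arith
  have e3: "(a+b-r) - (b-(t-r)) = (a + 1 + t) - (2*r + 1)"
    by (rule arith3[OF side(1,3,4,5)])
  have e4: "r - (t - r) = 2*r - t" using side by arith
  have fin: "has_type a b C ((a + 1 + t) - (2*r+1)) ((b + Br + r) - (Br + t)) ((a + 1 + t) - (2*r+1))
     \<and> has_type a b (dual a b C) (2*r - t) (t - r) (2*r - t)"
    using mc' unfolding e1 e2 e3 e4 by blast
  show ?thesis
    unfolding a_def[symmetric] b_def[symmetric]
    unfolding A B Br_def[symmetric] by (rule fin)
qed

end
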